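(* For every $t\ge0$ and $u\in[0,1]$, $$\mathbb E_{\mu_d,u}[\mathcal O_t(1-\mathcal O_t)]=u(1-u)\,\mathbb P_{\mu_d}(\tau^{\pi\otimes\pi}_{\rm meet}>t),\qquad \mathbb E_{\mu_d,u}[\mathcal D_t]=2u(1-u)\,\mathbb P_{\mu_d}(\tau^{\rm edge}_{\rm meet}>t),$$ and moreover $$\max_{\xi\in\{0,1\}^n}\mathbb E_{\mu_d,\xi}[\mathcal D_t]\le2\,\mathbb P_{\mu_d}(\tau^{\rm edge}_{\rm meet}>t).$$
   Context: Fix integers $d\ge3$, $n$ with $dn$ even, and $\nu>0$. Each vertex $x\in[n]$ carries $d$ stubs $\sigma_{x,1},\dots,\sigma_{x,d}$; a graph is a perfect matching of the $dn$ stubs; $\mathcal G_n(d)$ is the set of such matchings, $\mu_d$ the uniform distribution on it, ${\rm v}_G(x,i)$ the vertex owning the stub matched to $\sigma_{x,i}$ in $G$; write $\sigma_{x,i}\leftrightarrow_G\sigma_{y,j}$ if these stubs are matched in $G$. Rewiring dynamics $(G_t)$: for each ordered pair of distinct stubs $(\sigma_{x,i},\sigma_{y,j})$ not matched to each other, at rate $\frac\nu4\cdot\frac1{dn-1}$ the edges $\{\sigma_{x,i},\sigma_{z,k}\},\{\sigma_{y,j},\sigma_{v,\ell}\}$ are replaced by $\{\sigma_{x,i},\sigma_{y,j}\},\{\sigma_{z,k},\sigma_{v,\ell}\}$. Voter model: $(G_t,\eta_t)$ with $G_t$ following the rewiring dynamics and, for each $x$ and $1\le i\le d$, at rate $1/d$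 the opinion $\eta(x)$ is replaced by $\eta({\rm v}_{G_t}(x,i))$. $\mathbb P_{\mu_d,u}$: $G_0\sim\mu_d$ and independently $\eta_0$ i.i.d. Bernoulli$(u)$; $\mathbb P_{\mu_d,\xi}$: $G_0\sim\mu_d$ and $\eta_0=\xi$. $\mathcal O_t=\frac1n\sum_x\eta_t(x)$, $\mathcal D_t=\frac{2}{dn}\sum_x\eta_t(x)\sum_{i=1}^d(1-\eta_t({\rm v}_{G_t}(x,i)))$. Random walks: $(G_t,X_t,Y_t)$ where $G_t$ follows the rewiring dynamics and independently each of $X,Y$, at rate $1/d$ for each $i$, jumps from its position $x$ to ${\rm v}_{G_t}(x,i)$; $\tau^{x,y}_{\rm meet}=\inf\{s\ge0:X_s=Y_s\}$ for $X_0=x,Y_0=y$; under $\mathbb P_{\mu_d}$, $G_0\sim\mu_d$. $\tau^{\pi\otimes\pi}_{\rm meet}$ is the meeting time when $X_0,Y_0$ are independent uniform on $[n]$ (independent of $G_0$); $\tau^{\rm edge}_{\rm meet}$ is the meeting time when the walks start at the two endpoints of the edge of $G_0$ containing a uniformly chosen stub, i.e. $\mathbb P_{\mu_d}(\tau^{\rm edge}_{\rm meet}>t)=\frac{1}{dn}\sum_{x\ne y}\sum_{i,j=1}^d\mathbb P_{\mu_d}(\sigma_{x,i}\leftrightarrow_{G_0}\sigma_{y,j},\ \tau^{x,y}_{\rm meet}>t)$. *)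

theory Defs
  imports "HOL-Analysis.Analysis"
begin

text \<open>Stubs are pairs (x, i) with x < n (vertex) and i < d (stub index, 0-based).
  A graph is a perfect matching of the stubs, encoded as a fixed-point-free involution
  on the stub set (and the identity outside it).\<close>

type_synonym stub = "nat \<times> nat"
type_synonym graph = "stub \<Rightarrow> stub"

definition stubs :: "nat \<Rightarrow> nat \<Rightarrow> stub set" where
  "stubs n d = {0..<n} \<times> {0..<d}"

definition graphs :: "nat \<Rightarrow> nat \<Rightarrow> graph set" where
  "graphs n d = {G. (\<forall>s\<in>stubs n d. G s \<in> stubs n d \<and> G s \<noteq> s \<and> G (G s) = s)
                    \<and> (\<forall>s. s \<notin> stubs n d \<longrightarrow> G s = s)}"

definition nbr :: "graph \<Rightarrow> nat \<Rightarrow> nat \<Rightarrow> nat" where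
  "nbr G x i = fst (G (x, i))"

text \<open>Rewiring move for the ordered pair of stubs (a, b): edges {a, G a}, {b, G b}
  are replaced by {a, b}, {G a, G b}.\<close>
definition rewire :: "graph \<Rightarrow> stub \<Rightarrow> stub \<Rightarrow> graph" where
  "rewire G a b = (let c = G a; e = G b in G(a := b, b := a, c := e, e := c))"

text \<open>Transition semigroup e^{tL} of a continuous-time Markov chain with generator L
  (acting on observables), applied to the observable f and evaluated at the state s:
  this is E_s[f(Z_t)].\<close>
definition semigroup :: "(('s \<Rightarrow> real) \<Rightarrow> ('s \<Rightarrow> real)) \<Rightarrow> real \<Rightarrow> ('s \<Rightarrow> real) \<Rightarrow> 's \<Rightarrow> real" where
  "semigroup L t f s = (\<Sum>k. t ^ k / fact k * (L ^^ k) f s)"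

definition rewire_gen :: "nat \<Rightarrow> nat \<Rightarrow> real \<Rightarrow> (graph \<times> 'a \<Rightarrow> real) \<Rightarrow> graph \<times> 'a \<Rightarrow> real" where
  "rewire_gen n d \<nu> f = (\<lambda>(G, z).
      \<Sum>a\<in>stubs n d. \<Sum>b\<in>stubs n d - {a, G a}.
         (\<nu> / 4) / (real (d * n) - 1) * (f (rewire G a b, z) - f (G, z)))"

definition voter_gen :: "nat \<Rightarrow> nat \<Rightarrow> real \<Rightarrow> (graph \<times> (nat \<Rightarrow> bool) \<Rightarrow> real)
                          \<Rightarrow> graph \<times> (nat \<Rightarrow> bool) \<Rightarrow> real" where
  "voter_gen n d \<nu> f = (\<lambda>(G, \<eta>).
      rewire_gen n d \<nu> f (G, \<eta>)
      + (\<Sum>x<n. \<Sum>i<d. (1 / real d) * (f (G, \<eta>(x := \<eta> (nbr G x i))) - f (G, \<eta>))))"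

text \<open>For the law of the meeting time only the stopped process
  matters: P(tau_meet > t) = P(X_t /= Y_t) for the stopped process.\<close>
definition walk_stop_gen :: "nat \<Rightarrow> nat \<Rightarrow> real \<Rightarrow> (graph \<times> (nat \<times> nat) \<Rightarrow> real)
                          \<Rightarrow> graph \<times> (nat \<times> nat) \<Rightarrow> real" where
  "walk_stop_gen n d \<nu> f = (\<lambda>(G, (X, Y)).
      rewire_gen n d \<nu> f (G, (X, Y))
      + (if X = Y then 0 else
           (\<Sum>i<d. (1 / real d) * (f (G, (nbr G X i, Y)) - f (G, (X, Y))))
         + (\<Sum>i<d. (1 / real d) * (f (G, (X, nbr G Y i)) - f (G, (X, Y))))))"

definition meet_tail :: "nat \<Rightarrow> nat \<Rightarrow> real \<Rightarrow> real \<Rightarrow> graph \<Rightarrow> nat \<Rightarrow> nat \<Rightarrow> real" where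
  "meet_tail n d \<nu> t G x y =
     semigroup (walk_stop_gen n d \<nu>) t (\<lambda>(G', (X, Y)). if X \<noteq> Y then 1 else 0) (G, (x, y))"

definition avg_mu :: "nat \<Rightarrow> nat \<Rightarrow> (graph \<Rightarrow> real) \<Rightarrow> real" where
  "avg_mu n d F = (\<Sum>G\<in>graphs n d. F G) / real (card (graphs n d))"

definition meet_tail_pi :: "nat \<Rightarrow> nat \<Rightarrow> real \<Rightarrow> real \<Rightarrow> real" where
  "meet_tail_pi n d \<nu> t = avg_mu n d (\<lambda>G.
      (\<Sum>x<n. \<Sum>y<n. meet_tail n d \<nu> t G x y) / (real n) ^ 2)"

definition meet_tail_edge :: "nat \<Rightarrow> nat \<Rightarrow> real \<Rightarrow> real \<Rightarrow> real" where
  "meet_tail_edge n d \<nu> t =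
     (1 / real (d * n)) * (\<Sum>x<n. \<Sum>y\<in>{..<n} - {x}. \<Sum>i<d. \<Sum>j<d.
        avg_mu n d (\<lambda>G. if G (x, i) = (y, j) then meet_tail n d \<nu> t G x y else 0))"

text \<open>Opinion configurations {0,1}^n (True = opinion 1), False outside [n].\<close>
definition configs :: "nat \<Rightarrow> (nat \<Rightarrow> bool) set" where
  "configs n = {\<xi>. \<forall>x. \<xi> x \<longrightarrow> x < n}"

definition opinion_density :: "nat \<Rightarrow> (nat \<Rightarrow> bool) \<Rightarrow> real" where
  "opinion_density n \<eta> = (\<Sum>x<n. if \<eta> x then 1 else 0) / real n"

definition discordance :: "nat \<Rightarrow> nat \<Rightarrow> graph \<Rightarrow> (nat \<Rightarrow> bool) \<Rightarrow> real" where
  "discordance n d G \<eta> = 2 / real (d * n) *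
     (\<Sum>x<n. (if \<eta> x then 1 else 0) * (\<Sum>i<d. if \<eta> (nbr G x i) then 0 else 1))"

definition voter_exp_xi :: "nat \<Rightarrow> nat \<Rightarrow> real \<Rightarrow> real \<Rightarrow> (nat \<Rightarrow> bool)
                           \<Rightarrow> (graph \<times> (nat \<Rightarrow> bool) \<Rightarrow> real) \<Rightarrow> real" where
  "voter_exp_xi n d \<nu> t \<xi> F = avg_mu n d (\<lambda>G. semigroup (voter_gen n d \<nu>) t F (G, \<xi>))"

definition voter_exp_u :: "nat \<Rightarrow> nat \<Rightarrow> real \<Rightarrow> real \<Rightarrow> real
                           \<Rightarrow> (graph \<times> (nat \<Rightarrow> bool) \<Rightarrow> real) \<Rightarrow> real" where
  "voter_exp_u n d \<nu> t u F = (\<Sum>\<xi>\<in>configs n.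
      u ^ card {x\<in>{..<n}. \<xi> x} * (1 - u) ^ card {x\<in>{..<n}. \<not> \<xi> x}
      * voter_exp_xi n d \<nu> t \<xi> F)"

end

theory Submission
  imports Defs
begin


definition lin :: "(('s \<Rightarrow> real) \<Rightarrow> ('s \<Rightarrow> real)) \<Rightarrow> bool" where
  "lin L \<longleftrightarrow> (\<forall>a b f g. L (\<lambda>s. a * f s + b * g s) = (\<lambda>s. a * L f s + b * L g s))"

lemma lin_add: "lin L \<Longrightarrow> L (\<lambda>s. f s + g s) = (\<lambda>s. L f s + L g s)"
  unfolding lin_def by (drule spec[of _ 1], drule spec[of _ 1]) simp

lemma lin_cmult: "lin L \<Longrightarrow> L (\<lambda>s. a * f s) = (\<lambda>s. a * L f s)"
  unfolding lin_def by (drule spec[of _ a], drule spec[of _ 0]) simp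

lemma lin_zero: "lin L \<Longrightarrow> L (\<lambda>s. 0) = (\<lambda>s. 0)"
  using lin_cmult[of L 0 "\<lambda>s. 0"] by simp

lemma lin_diff: "lin L \<Longrightarrow> L (\<lambda>s. f s - g s) = (\<lambda>s. L f s - L g s)"
  unfolding lin_def by (drule spec[of _ 1], drule spec[of _ "-1"]) simp

lemma lin_sum: "lin L \<Longrightarrow> L (\<lambda>s. \<Sum>i\<in>I. F i s) = (\<lambda>s. \<Sum>i\<in>I. L (F i) s)"
proof (induction I rule: infinite_finite_induct)
  case (infinite A) then show ?case by (simp add: lin_zero)
next
  case empty then show ?case by (simp add: lin_zero)
next
  case (insert x J) then show ?case
    using lin_add[of L "F x" "\<lambda>s. \<Sum>i\<in>J. F i s"] by simp
qed

lemma lin_funpow: assumes "lin L" shows "lin (L ^^ k)"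
proof (induction k)
  case 0 show ?case by (simp add: lin_def)
next
  case (Suc k)
  show ?case unfolding lin_def
  proof (intro allI)
    fix a b f g
    have "(L ^^ Suc k) (\<lambda>s. a * f s + b * g s) = L (\<lambda>s. a * (L ^^ k) f s + b * (L ^^ k) g s)"
      using Suc unfolding lin_def by simp
    also have "\<dots> = (\<lambda>s. a * (L ^^ Suc k) f s + b * (L ^^ Suc k) g s)"
      using assms unfolding lin_def by simp
    finally show "(L ^^ Suc k) (\<lambda>s. a * f s + b * g s) = (\<lambda>s. a * (L ^^ Suc k) f s + b * (L ^^ Suc k) g s)" .
  qed
qed

definition bnd :: "(('s \<Rightarrow> real) \<Rightarrow> ('s \<Rightarrow> real)) \<Rightarrow> real \<Rightarrow> bool" where
  "bnd L C \<longleftrightarrow> (\<forall>f B. (\<forall>s. \<bar>f s\<bar> \<le> B) \<longrightarrow> (\<forall>s. \<bar>L f s\<bar> \<le> C * B))"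

lemma bnd_funpow:
  assumes "bnd L C" "C \<ge> 0" "\<forall>s. \<bar>f s\<bar> \<le> B"
  shows "\<bar>(L ^^ k) f s\<bar> \<le> C ^ k * B"
  using assms(3)
proof (induction k arbitrary: s)
  case 0 then show ?case by simp
next
  case (Suc k)
  have "\<forall>s. \<bar>(L ^^ k) f s\<bar> \<le> C ^ k * B" using Suc by blast
  then have "\<bar>L ((L ^^ k) f) s\<bar> \<le> C * (C ^ k * B)" using assms(1) unfolding bnd_def by blast
  then show ?case by (simp add: mult.assoc)
qed

lemma summable_sg:
  assumes "bnd L C" "C \<ge> 0" "\<forall>s. \<bar>f s\<bar> \<le> B"
  shows "summable (\<lambda>k. t ^ k / fact k * (L ^^ k) f s)"
    and "summable (\<lambda>k. norm (t ^ k / fact k * (L ^^ k) f s))"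
proof -
  have e: "summable (\<lambda>k. B * (inverse (fact k) * (\<bar>t\<bar> * C) ^ k))"
    by (rule summable_mult[OF summable_exp])
  have le: "norm (norm (t ^ k / fact k * (L ^^ k) f s)) \<le> B * (inverse (fact k) * (\<bar>t\<bar> * C) ^ k)" for k
  proof -
    have "norm (norm (t ^ k / fact k * (L ^^ k) f s)) = \<bar>t\<bar> ^ k / fact k * \<bar>(L ^^ k) f s\<bar>"
      unfolding real_norm_def abs_abs abs_mult abs_divide power_abs
      by (subst abs_of_pos[of "fact k"]) (simp, rule refl)
    also have "\<dots> \<le> \<bar>t\<bar> ^ k / fact k * (C ^ k * B)"
      by (rule mult_left_mono[OF bnd_funpow[OF assms]]) simp
    also have "\<dots> = B * (inverse (fact k) * (\<bar>t\<bar> * C) ^ k)"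
      by (simp only: power_mult_distrib divide_inverse mult_ac)
    finally show ?thesis .
  qed
  show "summable (\<lambda>k. norm (t ^ k / fact k * (L ^^ k) f s))"
    by (rule summable_comparison_test'[OF e le])
  then show "summable (\<lambda>k. t ^ k / fact k * (L ^^ k) f s)"
    by (rule summable_norm_cancel)
qed

lemma sg_lincomb:
  assumes "lin L" "finite I" "\<And>i. i \<in> I \<Longrightarrow> summable (\<lambda>k. t ^ k / fact k * (L ^^ k) (F i) s)"
  shows "semigroup L t (\<lambda>s. \<Sum>i\<in>I. c i * F i s) s = (\<Sum>i\<in>I. c i * semigroup L t (F i) s)"
proof -
  have "(L ^^ k) (\<lambda>s. \<Sum>i\<in>I. c i * F i s) s = (\<Sum>i\<in>I. c i * (L ^^ k) (F i) s)" for k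
    using lin_sum[OF lin_funpow[OF assms(1)], of k "\<lambda>i s. c i * F i s" I]
      lin_cmult[OF lin_funpow[OF assms(1)]] by simp
  then have "semigroup L t (\<lambda>s. \<Sum>i\<in>I. c i * F i s) s
      = (\<Sum>k. \<Sum>i\<in>I. c i * (t ^ k / fact k * (L ^^ k) (F i) s))"
    unfolding semigroup_def by (simp add: sum_distrib_left mult_ac)
  also have "\<dots> = (\<Sum>i\<in>I. \<Sum>k. c i * (t ^ k / fact k * (L ^^ k) (F i) s))"
    by (rule suminf_sum) (rule summable_mult, rule assms(3), assumption)
  also have "\<dots> = (\<Sum>i\<in>I. c i * semigroup L t (F i) s)"
    unfolding semigroup_def by (intro sum.cong refl) (rule suminf_mult, rule assms(3), assumption)
  finally show ?thesis .
qed

definition loc :: "(('s \<Rightarrow> real) \<Rightarrow> ('s \<Rightarrow> real)) \<Rightarrow> 's set \<Rightarrow> bool" where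
  "loc L T \<longleftrightarrow> (\<forall>f g. (\<forall>s\<in>T. f s = g s) \<longrightarrow> (\<forall>s\<in>T. L f s = L g s))"

lemma loc_funpow: "loc L T \<Longrightarrow> \<forall>s\<in>T. f s = g s \<Longrightarrow> s \<in> T \<Longrightarrow> (L ^^ k) f s = (L ^^ k) g s"
proof (induction k arbitrary: s)
  case 0 then show ?case by simp
next
  case (Suc k)
  have "\<forall>s\<in>T. (L ^^ k) f s = (L ^^ k) g s" using Suc by blast
  then show ?case using Suc.prems(1,3) unfolding loc_def by simp
qed

lemma loc_sg: "loc L T \<Longrightarrow> \<forall>s\<in>T. f s = g s \<Longrightarrow> s \<in> T \<Longrightarrow> semigroup L t f s = semigroup L t g s"
  unfolding semigroup_def using loc_funpow[of L T f g s] by simp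





lemma pascal:
  fixes q :: "nat \<Rightarrow> real"
  shows "(\<Sum>j\<le>k. of_nat (k choose j) * (-l) ^ (k - j) * (q (Suc j) - l * q j))
       = (\<Sum>j\<le>Suc k. of_nat (Suc k choose j) * (-l) ^ (Suc k - j) * q j)"
proof -
  define g where "g j = of_nat (k choose j) * (-l) ^ (Suc k - j) * q j" for j
  have g1: "(\<Sum>j\<le>Suc k. g j) = g 0 + (\<Sum>j\<le>k. g (Suc j))"
    by (rule sum.atMost_Suc_shift)
  have g2: "(\<Sum>j\<le>Suc k. g j) = (\<Sum>j\<le>k. g j)"
    by (simp add: g_def)
  have h1: "(\<Sum>j\<le>k. of_nat (k choose j) * (-l) ^ (k - j) * (q (Suc j) - l * q j))
      = (\<Sum>j\<le>k. of_nat (k choose j) * (-l) ^ (k - j) * q (Suc j)) + (\<Sum>j\<le>k. g j)"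
    unfolding g_def sum.distrib[symmetric]
    by (intro sum.cong refl) (simp add: Suc_diff_le algebra_simps)
  have h2: "(\<Sum>j\<le>k. g j) = g 0 + (\<Sum>j\<le>k. g (Suc j))" using g1 g2 by simp
  have h3: "(\<Sum>j\<le>Suc k. of_nat (Suc k choose j) * (-l) ^ (Suc k - j) * q j)
      = of_nat (Suc k choose 0) * (-l) ^ (Suc k - 0) * q 0
        + (\<Sum>j\<le>k. of_nat (Suc k choose Suc j) * (-l) ^ (Suc k - Suc j) * q (Suc j))"
    by (rule sum.atMost_Suc_shift)
  have h4: "(\<Sum>j\<le>k. of_nat (Suc k choose Suc j) * (-l) ^ (Suc k - Suc j) * q (Suc j))
      = (\<Sum>j\<le>k. of_nat (k choose j) * (-l) ^ (k - j) * q (Suc j)) + (\<Sum>j\<le>k. g (Suc j))"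
    unfolding g_def sum.distrib[symmetric]
    by (intro sum.cong refl) (simp add: algebra_simps)
  show ?thesis unfolding h1 h2 h3 h4 by (simp add: g_def)
qed

lemma binom_op:
  assumes "lin L"
  shows "(L ^^ k) f = (\<lambda>s. \<Sum>j\<le>k. of_nat (k choose j) * (-l) ^ (k - j)
            * (((\<lambda>g s. L g s + l * g s)) ^^ j) f s)"
proof (induction k)
  case 0 then show ?case by simp
next
  case (Suc k)
  let ?Q = "(\<lambda>g s. L g s + l * g s)"
  have "(L ^^ Suc k) f = L ((L ^^ k) f)" by simp
  also have "\<dots> = (\<lambda>s. \<Sum>j\<le>k. of_nat (k choose j) * (-l) ^ (k - j) * L ((?Q ^^ j) f) s)"
    unfolding Suc using lin_sum[OF assms, of "\<lambda>j s. of_nat (k choose j) * (-l) ^ (k - j) * (?Q ^^ j) f s" "{..k}"]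
      lin_cmult[OF assms] by simp
  also have "\<dots> = (\<lambda>s. \<Sum>j\<le>k. of_nat (k choose j) * (-l) ^ (k - j)
        * ((?Q ^^ Suc j) f s - l * (?Q ^^ j) f s))"
    by simp
  also have "\<dots> = (\<lambda>s. \<Sum>j\<le>Suc k. of_nat (Suc k choose j) * (-l) ^ (Suc k - j) * (?Q ^^ j) f s)"
    by (rule ext) (rule pascal)
  finally show ?case .
qed

lemma sg_nonneg:
  assumes lin: "lin L" and bd: "bnd L C" and C: "C \<ge> 0" and l: "l \<ge> 0"
    and pos: "\<forall>g. (\<forall>s. g s \<ge> 0) \<longrightarrow> (\<forall>s. L g s + l * g s \<ge> 0)"
    and f0: "\<forall>s. 0 \<le> f s" and fB: "\<forall>s. f s \<le> B" and t: "t \<ge> 0"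
  shows "semigroup L t f s0 \<ge> 0"
proof -
  define Q where "Q = (\<lambda>g s. L g s + l * g s)"
  have linQ: "lin Q" using lin unfolding lin_def Q_def by (auto simp: algebra_simps fun_eq_iff)
  have bdQ: "bnd Q (C + l)"
    unfolding bnd_def
  proof (intro allI impI)
    fix g :: "'a \<Rightarrow> real" and B s assume g: "\<forall>s. \<bar>g s\<bar> \<le> B"
    have "\<bar>L g s\<bar> \<le> C * B" using bd g unfolding bnd_def by blast
    moreover have "\<bar>l * g s\<bar> \<le> l * B" using g l by (simp add: abs_mult mult_left_mono)
    ultimately show "\<bar>Q g s\<bar> \<le> (C + l) * B" unfolding Q_def by (simp add: algebra_simps)
  qed
  have Qpos: "\<forall>s. 0 \<le> (Q ^^ j) f s" for j
  proof (induction j)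
    case 0 then show ?case using f0 by simp
  next
    case (Suc j) then show ?case using pos unfolding Q_def by simp
  qed
  have fabs: "\<forall>s. \<bar>f s\<bar> \<le> B" using f0 fB by simp
  define a where "a j = t ^ j / fact j * (Q ^^ j) f s0" for j
  define b where "b m = (- l * t) ^ m / fact m" for m :: nat
  have sa: "summable (\<lambda>k. norm (a k))" unfolding a_def
    by (rule summable_sg(2)[OF bdQ _ fabs]) (use C l in simp)
  have sb: "summable (\<lambda>k. norm (b k))"
  proof -
    have "summable (\<lambda>k. inverse (fact k) * (l * t) ^ k)" by (rule summable_exp)
    moreover have "norm (b k) = inverse (fact k) * (l * t) ^ k" for k
      unfolding b_def using l t by (simp add: abs_mult power_abs divide_simps power_minus')
    ultimately show ?thesis by simp
  qed
  have tm: "t ^ k / fact k * (L ^^ k) f s0 = (\<Sum>i\<le>k. a i * b (k - i))" for k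
  proof -
    have "t ^ k / fact k * (L ^^ k) f s0
        = (\<Sum>i\<le>k. t ^ k / fact k * (of_nat (k choose i) * (-l) ^ (k - i) * (Q ^^ i) f s0))"
      unfolding binom_op[OF lin, of k f l] Q_def by (simp add: sum_distrib_left)
    also have "\<dots> = (\<Sum>i\<le>k. a i * b (k - i))"
    proof (intro sum.cong refl)
      fix i assume "i \<in> {..k}" then have ik: "i \<le> k" by simp
      have tk: "t ^ k = t ^ i * t ^ (k - i)" using ik by (simp flip: power_add)
      have pm: "(- (l * t)) ^ m = (-l) ^ m * t ^ m" for m
        by (metis mult_minus_left power_mult_distrib)
      show "t ^ k / fact k * (of_nat (k choose i) * (-l) ^ (k - i) * (Q ^^ i) f s0) = a i * b (k - i)"
        unfolding a_def b_def binomial_fact[OF ik] tk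
        by (simp add: pm field_simps)
    qed
    finally show ?thesis .
  qed
  have "semigroup L t f s0 = (\<Sum>k. a k) * (\<Sum>k. b k)"
    unfolding semigroup_def tm using Cauchy_product[OF sa sb] by simp
  moreover have "(\<Sum>k. a k) \<ge> 0"
    using sa Qpos t unfolding a_def by (intro suminf_nonneg) (auto intro: summable_norm_cancel)
  moreover have "(\<Sum>k. b k) \<ge> 0"
  proof -
    have "b sums exp (- l * t)" using exp_converges[of "- l * t"] unfolding b_def
      by (simp add: divide_inverse mult.commute)
    then have "(\<Sum>k. b k) = exp (- l * t)" using sums_unique by metis
    then show ?thesis by simp
  qed
  ultimately show ?thesis by simp
qed




lemma finite_stubs: "finite (stubs n d)" by (simp add: stubs_def)

lemma card_stubs: "card (stubs n d) = d * n" by (simp add: stubs_def)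

lemma graphsD:
  assumes "G \<in> graphs n d"
  shows "\<And>s. s \<in> stubs n d \<Longrightarrow> G s \<in> stubs n d" "\<And>s. s \<in> stubs n d \<Longrightarrow> G s \<noteq> s"
    "\<And>s. s \<in> stubs n d \<Longrightarrow> G (G s) = s" "\<And>s. s \<notin> stubs n d \<Longrightarrow> G s = s"
  using assms unfolding graphs_def by auto

lemma graphs_inv: assumes G: "G \<in> graphs n d" shows "G (G s) = s"
proof (cases "s \<in> stubs n d")
  case True then show ?thesis using graphsD(3)[OF G] by simp
next
  case False then show ?thesis using graphsD(4)[OF G] by simp
qed

lemma finite_graphs: "finite (graphs n d)"
proof -
  let ?St = "stubs n d"
  let ?R = "\<lambda>G s. if s \<in> ?St then G s else undefined"
  have "?R ` graphs n d \<subseteq> {f. \<forall>x. (x \<in> ?St \<longrightarrow> f x \<in> ?St) \<and> (x \<notin> ?St \<longrightarrow> f x = undefined)}"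
  proof (rule image_subsetI)
    fix G assume G: "G \<in> graphs n d"
    show "?R G \<in> {f. \<forall>x. (x \<in> ?St \<longrightarrow> f x \<in> ?St) \<and> (x \<notin> ?St \<longrightarrow> f x = undefined)}"
      using graphsD(1)[OF G] by simp
  qed
  then have "finite (?R ` graphs n d)"
    by (rule finite_subset) (intro finite_set_of_finite_funs finite_stubs)
  moreover have "inj_on ?R (graphs n d)"
  proof (rule inj_onI)
    fix G H assume G: "G \<in> graphs n d" and H: "H \<in> graphs n d" and e: "?R G = ?R H"
    show "G = H"
    proof
      fix s show "G s = H s"
        using fun_cong[OF e, of s] graphsD(4)[OF G, of s] graphsD(4)[OF H, of s] by (auto split: if_splits)
    qed
  qed
  ultimately show ?thesis by (rule finite_imageD)
qed

lemma rewire_facts: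
  assumes G: "G \<in> graphs n d" and a: "a \<in> stubs n d" and b: "b \<in> stubs n d"
    and ba: "b \<noteq> a" and bGa: "b \<noteq> G a"
  shows "rewire G a b \<in> graphs n d" "rewire G a b a = b"
    "rewire (rewire G a b) a (G a) = G"
proof -
  define c where "c = G a"
  define e where "e = G b"
  have c: "c \<in> stubs n d" "G c = a" unfolding c_def using graphsD(1,3)[OF G a] by simp_all
  have e: "e \<in> stubs n d" "G e = b" unfolding e_def using graphsD(1,3)[OF G b] by simp_all
  have ca: "c \<noteq> a" unfolding c_def using graphsD(2)[OF G a] by simp
  have eb: "e \<noteq> b" unfolding e_def using graphsD(2)[OF G b] by simp
  have cb: "c \<noteq> b" using bGa unfolding c_def by simp
  have ea: "e \<noteq> a"
  proof
    assume "e = a" then have "G a = b" using e(2) by simp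
    then show False using cb c_def by simp
  qed
  have ce: "c \<noteq> e"
  proof
    assume "c = e" then have "G c = G e" by simp
    then show False using c(2) e(2) ba by simp
  qed
  have inv: "\<And>u. G (G u) = u" by (rule graphs_inv[OF G])
  have R: "rewire G a b = G(a := b, b := a, c := e, e := c)"
    unfolding rewire_def c_def e_def Let_def by simp
  have Gs: "G s \<noteq> a \<and> G s \<noteq> b \<and> G s \<noteq> c \<and> G s \<noteq> e" if "s \<noteq> a" "s \<noteq> b" "s \<noteq> c" "s \<noteq> e" for s
  proof (intro conjI notI)
    assume "G s = a" then have "G (G s) = G a" by simp
    then show False using inv[of s] that(3) c_def by simp
  next
    assume "G s = b" then have "G (G s) = G b" by simp
    then show False using inv[of s] that(4) e_def by simp
  next
    assume "G s = c" then have "G (G s) = G c" by simp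
    then show False using inv[of s] that(1) c(2) by simp
  next
    assume "G s = e" then have "G (G s) = G e" by simp
    then show False using inv[of s] that(2) e(2) by simp
  qed
  show "rewire G a b a = b" unfolding R using ca ea by simp
  show "rewire G a b \<in> graphs n d"
    unfolding R graphs_def
  proof (intro CollectI conjI ballI allI impI)
    fix s assume s: "s \<in> stubs n d"
    show "(G(a := b, b := a, c := e, e := c)) s \<in> stubs n d"
      using s a b c e graphsD(1)[OF G s] by auto
    show "(G(a := b, b := a, c := e, e := c)) s \<noteq> s"
      using s graphsD(2)[OF G s] ba ca ea cb eb ce by auto
    show "(G(a := b, b := a, c := e, e := c)) ((G(a := b, b := a, c := e, e := c)) s) = s"
    proof (cases "s \<in> {a, b, c, e}")
      case True then show ?thesis using ba ca ea cb eb ce by auto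
    next
      case False
      then have "s \<noteq> a" "s \<noteq> b" "s \<noteq> c" "s \<noteq> e" by auto
      with Gs[OF this] show ?thesis using graphs_inv[OF G, of s] by simp
    qed
  next
    fix s assume s: "s \<notin> stubs n d"
    then have "s \<noteq> a" "s \<noteq> b" "s \<noteq> c" "s \<noteq> e" using a b c e by auto
    then show "(G(a := b, b := a, c := e, e := c)) s = s" using graphsD(4)[OF G s] by simp
  qed
  show "rewire (rewire G a b) a (G a) = G"
  proof -
    have Ra: "(G(a := b, b := a, c := e, e := c)) a = b" using ca ea by simp
    have Rc: "(G(a := b, b := a, c := e, e := c)) c = e" using ce by simp
    have "rewire (rewire G a b) a (G a) = rewire (G(a := b, b := a, c := e, e := c)) a c"
      unfolding R c_def ..
    also have "\<dots> = (G(a := b, b := a, c := e, e := c))(a := c, c := a, b := e, e := b)"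
      unfolding rewire_def Let_def Ra Rc by (rule refl)
    also have "\<dots> = G"
    proof
      fix s
      have Gac: "G a = c" "G b = e" by (simp_all add: c_def e_def)
      show "(G(a := b, b := a, c := e, e := c, a := c, c := a, b := e, e := b)) s = G s"
        by (cases "s = a"; cases "s = b"; cases "s = c"; cases "s = e") (simp_all add: Gac c(2) e(2) ba ca ea cb eb ce ba[symmetric] ca[symmetric] ea[symmetric] cb[symmetric] eb[symmetric] ce[symmetric])
    qed
    finally show ?thesis .
  qed
qed




lemma sum_abs_card: "(\<And>a. a \<in> A \<Longrightarrow> \<bar>g a\<bar> \<le> M) \<Longrightarrow> \<bar>\<Sum>a\<in>A. g a\<bar> \<le> real (card A) * (M::real)"
  by (rule order_trans[OF sum_abs]) (rule sum_bounded_above)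

definition rc :: "nat \<Rightarrow> nat \<Rightarrow> real \<Rightarrow> real" where
  "rc n d \<nu> = (\<nu> / 4) / (real (d * n) - 1)"

lemma rewire_gen_eq: "rewire_gen n d \<nu> f (G, z) =
  (\<Sum>a\<in>stubs n d. \<Sum>b\<in>stubs n d - {a, G a}. rc n d \<nu> * (f (rewire G a b, z) - f (G, z)))"
  unfolding rewire_gen_def rc_def by simp

lemma lin_dsum: "(\<Sum>a\<in>A. \<Sum>b\<in>B a. (c::real) * ((p * F a b + q * H a b) - (p * F0 + q * H0)))
  = p * (\<Sum>a\<in>A. \<Sum>b\<in>B a. c * (F a b - F0)) + q * (\<Sum>a\<in>A. \<Sum>b\<in>B a. c * (H a b - H0))"
  apply (simp only: sum_distrib_left sum.distrib[symmetric])
  apply (rule sum.cong[OF refl], rule sum.cong[OF refl])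
  apply (simp add: algebra_simps)
  done

lemma rewire_gen_lin: "lin (rewire_gen n d \<nu>)"
  unfolding lin_def
proof (intro allI ext)
  fix a b :: real and f g :: "graph \<times> 'a \<Rightarrow> real" and p :: "graph \<times> 'a"
  obtain G z where p: "p = (G, z)" by fastforce
  show "rewire_gen n d \<nu> (\<lambda>s. a * f s + b * g s) p = a * rewire_gen n d \<nu> f p + b * rewire_gen n d \<nu> g p"
    unfolding p rewire_gen_eq by (rule lin_dsum)
qed

lemma lin_lsum: "(\<Sum>a\<in>A. \<Sum>b\<in>B a. (c::real) * ((p * F a b + q * H a b) - (p * F0 + q * H0)))
  = p * (\<Sum>a\<in>A. \<Sum>b\<in>B a. c * (F a b - F0)) + q * (\<Sum>a\<in>A. \<Sum>b\<in>B a. c * (H a b - H0))"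
  by (rule lin_dsum)

lemma lin_ssum: "(\<Sum>b\<in>B. (c::real) * ((p * F b + q * H b) - (p * F0 + q * H0)))
  = p * (\<Sum>b\<in>B. c * (F b - F0)) + q * (\<Sum>b\<in>B. c * (H b - H0))"
  apply (simp only: sum_distrib_left sum.distrib[symmetric])
  apply (rule sum.cong[OF refl])
  apply (simp add: algebra_simps)
  done

lemma voter_gen_lin: "lin (voter_gen n d \<nu>)"
  unfolding lin_def
proof (intro allI ext)
  fix a b :: real and f g :: "graph \<times> (nat \<Rightarrow> bool) \<Rightarrow> real" and p :: "graph \<times> (nat \<Rightarrow> bool)"
  obtain G z where p: "p = (G, z)" by fastforce
  have r: "rewire_gen n d \<nu> (\<lambda>s. a * f s + b * g s) = (\<lambda>s. a * rewire_gen n d \<nu> f s + b * rewire_gen n d \<nu> g s)"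
    using rewire_gen_lin unfolding lin_def by blast
  show "voter_gen n d \<nu> (\<lambda>s. a * f s + b * g s) p = a * voter_gen n d \<nu> f p + b * voter_gen n d \<nu> g p"
    unfolding p voter_gen_def split r lin_dsum by (simp add: algebra_simps)
qed

lemma walk_gen_lin: "lin (walk_stop_gen n d \<nu>)"
  unfolding lin_def
proof (intro allI ext)
  fix a b :: real and f g :: "graph \<times> (nat \<times> nat) \<Rightarrow> real" and p :: "graph \<times> (nat \<times> nat)"
  obtain G X Y where p: "p = (G, (X, Y))" by (metis prod.exhaust)
  have r: "rewire_gen n d \<nu> (\<lambda>s. a * f s + b * g s) = (\<lambda>s. a * rewire_gen n d \<nu> f s + b * rewire_gen n d \<nu> g s)"
    using rewire_gen_lin unfolding lin_def by blast
  show "walk_stop_gen n d \<nu> (\<lambda>s. a * f s + b * g s) p = a * walk_stop_gen n d \<nu> f p + b * walk_stop_gen n d \<nu> g p"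
    unfolding p walk_stop_gen_def split r lin_ssum by (simp add: algebra_simps)
qed

lemma rc_nonneg: assumes "\<nu> \<ge> 0" "d * n \<ge> 2" shows "rc n d \<nu> \<ge> 0"
proof -
  have h: "(2::real) \<le> real (d * n)" using assms(2) by (metis of_nat_le_iff of_nat_numeral)
  show ?thesis unfolding rc_def using h assms(1) by (intro divide_nonneg_nonneg) auto
qed

lemma card_inner: "card (stubs n d - X) \<le> d * n"
  using card_mono[OF finite_stubs Diff_subset, of n d X] by (simp add: card_stubs)

lemma rewire_bnd:
  assumes "\<nu> \<ge> 0" "d * n \<ge> 2" "\<forall>s. \<bar>f s\<bar> \<le> B"
  shows "\<bar>rewire_gen n d \<nu> f p\<bar> \<le> real (d * n) * real (d * n) * rc n d \<nu> * 2 * B"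
proof -
  obtain G z where p: "p = (G, z)" by fastforce
  have B: "B \<ge> 0" using assms(3) by (meson abs_ge_zero order_trans)
  have c: "rc n d \<nu> \<ge> 0" using rc_nonneg assms by blast
  have "\<bar>rewire_gen n d \<nu> f p\<bar> \<le> real (card (stubs n d)) * (real (d * n) * (rc n d \<nu> * (2 * B)))"
    unfolding p rewire_gen_def rc_def[symmetric] split
  proof (intro sum_abs_card)
    fix a assume "a \<in> stubs n d"
    have "\<bar>\<Sum>b\<in>stubs n d - {a, G a}. rc n d \<nu> * (f (rewire G a b, z) - f (G, z))\<bar>
        \<le> real (card (stubs n d - {a, G a})) * (rc n d \<nu> * (2 * B))"
    proof (intro sum_abs_card)
      fix b
      have "\<bar>f (rewire G a b, z) - f (G, z)\<bar> \<le> 2 * B" using assms(3)[rule_format, of "(rewire G a b, z)"]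
          assms(3)[rule_format, of "(G, z)"] by linarith
      then show "\<bar>rc n d \<nu> * (f (rewire G a b, z) - f (G, z))\<bar> \<le> rc n d \<nu> * (2 * B)"
        using c by (simp add: abs_mult mult_left_mono)
    qed
    also have "\<dots> \<le> real (d * n) * (rc n d \<nu> * (2 * B))"
    proof (intro mult_right_mono)
      show "real (card (stubs n d - {a, G a})) \<le> real (d * n)"
        using card_inner[of n d "{a, G a}"] by (simp only: of_nat_le_iff)
      show "0 \<le> rc n d \<nu> * (2 * B)" using c B by simp
    qed
    finally show "\<bar>\<Sum>b\<in>stubs n d - {a, G a}. rc n d \<nu> * (f (rewire G a b, z) - f (G, z))\<bar>
        \<le> real (d * n) * (rc n d \<nu> * (2 * B))" .
  qed
  then show ?thesis by (simp add: card_stubs mult_ac)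
qed

lemma rewire_pos:
  assumes "\<nu> \<ge> 0" "d * n \<ge> 2" "\<forall>s. f s \<ge> 0"
  shows "rewire_gen n d \<nu> f p + real (d * n) * real (d * n) * rc n d \<nu> * f p \<ge> 0"
proof -
  obtain G z where p: "p = (G, z)" by fastforce
  have c: "rc n d \<nu> \<ge> 0" using rc_nonneg assms by blast
  have f0: "f (G, z) \<ge> 0" using assms by blast
  have "rewire_gen n d \<nu> f p \<ge> (\<Sum>a\<in>stubs n d. \<Sum>b\<in>stubs n d - {a, G a}. - (rc n d \<nu> * f (G, z)))"
    unfolding p rewire_gen_def rc_def[symmetric] split
  proof (intro sum_mono)
    fix a b
    have "rc n d \<nu> * f (rewire G a b, z) \<ge> 0" using c assms(3) by simp
    then show "- (rc n d \<nu> * f (G, z)) \<le> rc n d \<nu> * (f (rewire G a b, z) - f (G, z))"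
      by (simp add: right_diff_distrib)
  qed
  moreover have "(\<Sum>a\<in>stubs n d. \<Sum>b\<in>stubs n d - {a, G a}. rc n d \<nu> * f (G, z))
      \<le> real (card (stubs n d)) * (real (d * n) * (rc n d \<nu> * f (G, z)))"
  proof (intro sum_bounded_above)
    fix a
    have "(\<Sum>b\<in>stubs n d - {a, G a}. rc n d \<nu> * f (G, z)) = real (card (stubs n d - {a, G a})) * (rc n d \<nu> * f (G, z))"
      by simp
    also have "\<dots> \<le> real (d * n) * (rc n d \<nu> * f (G, z))"
    proof (intro mult_right_mono)
      show "real (card (stubs n d - {a, G a})) \<le> real (d * n)"
        using card_inner[of n d "{a, G a}"] by (simp only: of_nat_le_iff)
      show "0 \<le> rc n d \<nu> * f (G, z)" using c f0 by simp
    qed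
    finally show "(\<Sum>b\<in>stubs n d - {a, G a}. rc n d \<nu> * f (G, z)) \<le> real (d * n) * (rc n d \<nu> * f (G, z))" .
  qed
  ultimately show ?thesis unfolding p by (simp add: card_stubs sum_negf mult_ac)
qed

lemma local_bnd:
  assumes "d \<ge> 1" "\<forall>s. \<bar>f s\<bar> \<le> (B::real)"
  shows "\<bar>\<Sum>i<d. (1 / real d) * (f (h i) - f q)\<bar> \<le> 2 * B"
proof -
  have "\<bar>\<Sum>i<d. (1 / real d) * (f (h i) - f q)\<bar> \<le> real (card {..<d}) * ((1 / real d) * (2 * B))"
  proof (intro sum_abs_card)
    fix i
    have "\<bar>f (h i) - f q\<bar> \<le> 2 * B" using assms(2)[rule_format, of "h i"] assms(2)[rule_format, of q] by linarith
    then show "\<bar>1 / real d * (f (h i) - f q)\<bar> \<le> 1 / real d * (2 * B)" by (simp add: abs_mult divide_right_mono)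
  qed
  then show ?thesis using assms(1) by simp
qed

lemma local_pos:
  assumes "d \<ge> 1" "\<forall>s. f s \<ge> (0::real)"
  shows "(\<Sum>i<d. (1 / real d) * (f (h i) - f q)) + f q \<ge> 0"
proof -
  have "(\<Sum>i<d. (1 / real d) * (f (h i) - f q)) \<ge> (\<Sum>i<d. - (1 / real d) * f q)"
  proof (intro sum_mono)
    fix i
    have "f (h i) / real d \<ge> 0" using assms(2) by simp
    then show "- (1 / real d) * f q \<le> (1 / real d) * (f (h i) - f q)" by (simp add: diff_divide_distrib)
  qed
  then show ?thesis using assms(1) by simp
qed

definition CV :: "nat \<Rightarrow> nat \<Rightarrow> real \<Rightarrow> real" where
  "CV n d \<nu> = real (d * n) * real (d * n) * rc n d \<nu> * 2 + 2 * real n + 4"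

lemma CV_nonneg: "\<nu> \<ge> 0 \<Longrightarrow> d * n \<ge> 2 \<Longrightarrow> CV n d \<nu> \<ge> 0"
  unfolding CV_def using rc_nonneg[of \<nu> d n] by simp

lemma voter_bnd:
  assumes "\<nu> \<ge> 0" "d * n \<ge> 2" "d \<ge> 1"
  shows "bnd (voter_gen n d \<nu>) (CV n d \<nu>)"
  unfolding bnd_def
proof (intro allI impI)
  fix f :: "graph \<times> (nat \<Rightarrow> bool) \<Rightarrow> real" and B :: real and p :: "graph \<times> (nat \<Rightarrow> bool)"
  assume fB: "\<forall>s. \<bar>f s\<bar> \<le> B"
  obtain G \<eta> where p: "p = (G, \<eta>)" by fastforce
  have B: "B \<ge> 0" using fB by (meson abs_ge_zero order_trans)
  have r: "\<bar>rewire_gen n d \<nu> f (G, \<eta>)\<bar> \<le> real (d * n) * real (d * n) * rc n d \<nu> * 2 * B"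
    by (rule rewire_bnd[OF assms(1,2) fB])
  have l: "\<bar>\<Sum>x<n. \<Sum>i<d. (1 / real d) * (f (G, \<eta>(x := \<eta> (nbr G x i))) - f (G, \<eta>))\<bar> \<le> real (card {..<n}) * (2 * B)"
    by (intro sum_abs_card local_bnd[OF assms(3) fB])
  show "\<bar>voter_gen n d \<nu> f p\<bar> \<le> CV n d \<nu> * B"
    unfolding p voter_gen_def split CV_def using r l B by (simp add: algebra_simps)
qed

lemma walk_bnd:
  assumes "\<nu> \<ge> 0" "d * n \<ge> 2" "d \<ge> 1"
  shows "bnd (walk_stop_gen n d \<nu>) (CV n d \<nu>)"
  unfolding bnd_def
proof (intro allI impI)
  fix f :: "graph \<times> (nat \<times> nat) \<Rightarrow> real" and B :: real and p :: "graph \<times> (nat \<times> nat)"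
  assume fB: "\<forall>s. \<bar>f s\<bar> \<le> B"
  obtain G X Y where p: "p = (G, (X, Y))" by (metis prod.exhaust)
  have B: "B \<ge> 0" using fB by (meson abs_ge_zero order_trans)
  have r: "\<bar>rewire_gen n d \<nu> f (G, (X, Y))\<bar> \<le> real (d * n) * real (d * n) * rc n d \<nu> * 2 * B"
    by (rule rewire_bnd[OF assms(1,2) fB])
  have l1: "\<bar>\<Sum>i<d. (1 / real d) * (f (G, (nbr G X i, Y)) - f (G, (X, Y)))\<bar> \<le> 2 * B"
    by (rule local_bnd[OF assms(3) fB])
  have l2: "\<bar>\<Sum>i<d. (1 / real d) * (f (G, (X, nbr G Y i)) - f (G, (X, Y)))\<bar> \<le> 2 * B"
    by (rule local_bnd[OF assms(3) fB])
  show "\<bar>walk_stop_gen n d \<nu> f p\<bar> \<le> CV n d \<nu> * B"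
    unfolding p walk_stop_gen_def split CV_def using r l1 l2 B
    by (simp add: algebra_simps) (smt (verit) mult_nonneg_nonneg of_nat_0_le_iff)
qed

definition LW :: "nat \<Rightarrow> nat \<Rightarrow> real \<Rightarrow> real" where
  "LW n d \<nu> = real (d * n) * real (d * n) * rc n d \<nu> + 2"

lemma walk_pos:
  assumes "\<nu> \<ge> 0" "d * n \<ge> 2" "d \<ge> 1"
  shows "\<forall>g. (\<forall>s. g s \<ge> 0) \<longrightarrow> (\<forall>s. walk_stop_gen n d \<nu> g s + LW n d \<nu> * g s \<ge> 0)"
proof (intro allI impI)
  fix g :: "graph \<times> (nat \<times> nat) \<Rightarrow> real" and p :: "graph \<times> (nat \<times> nat)"
  assume g: "\<forall>s. g s \<ge> (0::real)"
  obtain G X Y where p: "p = (G, (X, Y))" by (metis prod.exhaust)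
  have r: "rewire_gen n d \<nu> g (G, (X, Y)) + real (d * n) * real (d * n) * rc n d \<nu> * g (G, (X, Y)) \<ge> 0"
    by (rule rewire_pos[OF assms(1,2) g])
  have l1: "(\<Sum>i<d. (1 / real d) * (g (G, (nbr G X i, Y)) - g (G, (X, Y)))) + g (G, (X, Y)) \<ge> 0"
    by (rule local_pos[OF assms(3) g])
  have l2: "(\<Sum>i<d. (1 / real d) * (g (G, (X, nbr G Y i)) - g (G, (X, Y)))) + g (G, (X, Y)) \<ge> 0"
    by (rule local_pos[OF assms(3) g])
  have g0: "g (G, (X, Y)) \<ge> 0" using g by blast
  define R where "R = rewire_gen n d \<nu> g (G, (X, Y))"
  define S1 where "S1 = (\<Sum>i<d. (1 / real d) * (g (G, (nbr G X i, Y)) - g (G, (X, Y))))"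
  define S2 where "S2 = (\<Sum>i<d. (1 / real d) * (g (G, (X, nbr G Y i)) - g (G, (X, Y))))"
  define K where "K = real (d * n) * real (d * n) * rc n d \<nu>"
  have eq: "walk_stop_gen n d \<nu> g p = R + (if X = Y then 0 else S1 + S2)"
    unfolding p walk_stop_gen_def R_def S1_def S2_def by simp
  have eq2: "LW n d \<nu> * g p = K * g (G, (X, Y)) + 2 * g (G, (X, Y))"
    unfolding p LW_def K_def by (simp add: distrib_right)
  show "walk_stop_gen n d \<nu> g p + LW n d \<nu> * g p \<ge> 0"
    unfolding eq eq2 using r l1 l2 g0 unfolding R_def[symmetric] S1_def[symmetric] S2_def[symmetric] K_def[symmetric]
    by (cases "X = Y") simp_all
qed

lemma voter_loc: "loc (voter_gen n d \<nu>) (graphs n d \<times> UNIV)"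
  unfolding loc_def
proof (intro allI impI ballI)
  fix f g :: "graph \<times> (nat \<Rightarrow> bool) \<Rightarrow> real" and p
  assume fg: "\<forall>s\<in>graphs n d \<times> UNIV. f s = g s" and p: "p \<in> graphs n d \<times> (UNIV :: (nat \<Rightarrow> bool) set)"
  obtain G \<eta> where pe: "p = (G, \<eta>)" by fastforce
  have G: "G \<in> graphs n d" using p pe by simp
  have rw: "rewire_gen n d \<nu> f (G, \<eta>) = rewire_gen n d \<nu> g (G, \<eta>)"
    unfolding rewire_gen_def split
    by (intro sum.cong refl) (use fg G rewire_facts(1)[OF G] in auto)
  show "voter_gen n d \<nu> f p = voter_gen n d \<nu> g p"
    unfolding pe voter_gen_def split rw using fg G by simp
qed

lemma nbr_lt: "G \<in> graphs n d \<Longrightarrow> x < n \<Longrightarrow> i < d \<Longrightarrow> nbr G x i < n"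
  unfolding nbr_def using graphsD(1)[of G n d "(x, i)"] by (auto simp: stubs_def mem_Times_iff)

lemma walk_loc: "loc (walk_stop_gen n d \<nu>) (graphs n d \<times> ({..<n} \<times> {..<n}))"
  unfolding loc_def
proof (intro allI impI ballI)
  fix f g :: "graph \<times> (nat \<times> nat) \<Rightarrow> real" and p
  assume fg: "\<forall>s\<in>graphs n d \<times> ({..<n} \<times> {..<n}). f s = g s"
    and p: "p \<in> graphs n d \<times> ({..<n} \<times> {..<n})"
  obtain G X Y where pe: "p = (G, (X, Y))" by (metis prod.exhaust)
  have G: "G \<in> graphs n d" and XY: "X < n" "Y < n" using p pe by auto
  have rw: "rewire_gen n d \<nu> f (G, (X, Y)) = rewire_gen n d \<nu> g (G, (X, Y))"
    unfolding rewire_gen_def split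
    by (intro sum.cong refl) (use fg G XY rewire_facts(1)[OF G] in auto)
  show "walk_stop_gen n d \<nu> f p = walk_stop_gen n d \<nu> g p"
    unfolding pe walk_stop_gen_def split rw using fg G XY nbr_lt[OF G] by simp
qed




definition hdv :: "(nat \<Rightarrow> bool) \<Rightarrow> nat \<Rightarrow> nat \<Rightarrow> real" where
  "hdv \<eta> X Y = (if \<eta> X = \<eta> Y then 0 else 1)"

definition Hd :: "graph \<times> (nat \<Rightarrow> bool) \<Rightarrow> graph \<times> (nat \<times> nat) \<Rightarrow> real" where
  "Hd z w = (if fst z = fst w then hdv (snd z) (fst (snd w)) (snd (snd w)) else 0)"

lemma Hd_simp[simp]: "Hd (G0, \<eta>0) (G1, (X, Y)) = (if G0 = G1 then hdv \<eta>0 X Y else 0)"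
  by (simp add: Hd_def)

lemma lin_div: "lin L \<Longrightarrow> L (\<lambda>s. f s / c) = (\<lambda>s. L f s / c)"
  using lin_cmult[of L "inverse c" f] by (simp add: divide_inverse mult.commute)

lemma count_sum:
  assumes "finite A" "\<And>a. finite (B a)"
  shows "(\<Sum>a\<in>A. \<Sum>b\<in>B a. if P a b then 1 else 0 :: real) = real (card {(a, b). a \<in> A \<and> b \<in> B a \<and> P a b})"
proof -
  have e: "{(a, b). a \<in> A \<and> b \<in> B a \<and> P a b} = Sigma A (\<lambda>a. {b \<in> B a. P a b})" by auto
  have "(\<Sum>b\<in>B a. if P a b then 1 else 0 :: real) = real (card {b \<in> B a. P a b})" for a
    using sum.inter_filter[OF assms(2)[of a], of "\<lambda>b. 1 :: real" "P a"] by simp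
  then have "(\<Sum>a\<in>A. \<Sum>b\<in>B a. if P a b then 1 else 0 :: real) = (\<Sum>a\<in>A. real (card {b \<in> B a. P a b}))"
    by simp
  also have "\<dots> = real (\<Sum>a\<in>A. card {b \<in> B a. P a b})" by simp
  also have "(\<Sum>a\<in>A. card {b \<in> B a. P a b}) = card (Sigma A (\<lambda>a. {b \<in> B a. P a b}))"
    using assms by (simp add: card_SigmaI)
  finally show ?thesis unfolding e .
qed

definition Eset :: "nat \<Rightarrow> nat \<Rightarrow> graph \<Rightarrow> graph \<Rightarrow> (stub \<times> stub) set" where
  "Eset n d G G' = {(a, b). a \<in> stubs n d \<and> b \<in> stubs n d - {a, G a} \<and> rewire G a b = G'}"

lemma Eset_le:
  assumes G: "G \<in> graphs n d" and G': "G' \<in> graphs n d"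
  shows "card (Eset n d G G') \<le> card (Eset n d G' G)"
proof (rule card_inj_on_le)
  show "inj_on (\<lambda>(a, b). (a, G a)) (Eset n d G G')"
  proof (rule inj_onI)
    fix p q assume p: "p \<in> Eset n d G G'" and q: "q \<in> Eset n d G G'"
      and e: "(\<lambda>(a, b). (a, G a)) p = (\<lambda>(a, b). (a, G a)) q"
    obtain a b where pe: "p = (a, b)" by (cases p)
    obtain a' b' where qe: "q = (a', b')" by (cases q)
    have aa: "a' = a" using e pe qe by simp
    have "rewire G a b = G'" "a \<in> stubs n d" "b \<in> stubs n d" "b \<noteq> a" "b \<noteq> G a"
      using p pe unfolding Eset_def by auto
    then have "G' a = b" using rewire_facts(2)[OF G] by blast
    moreover have "rewire G a b' = G'" "a \<in> stubs n d" "b' \<in> stubs n d" "b' \<noteq> a" "b' \<noteq> G a"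
      using q qe aa unfolding Eset_def by auto
    then have "G' a = b'" using rewire_facts(2)[OF G] by blast
    ultimately show "p = q" using pe qe aa by simp
  qed
  show "(\<lambda>(a, b). (a, G a)) ` Eset n d G G' \<subseteq> Eset n d G' G"
  proof (rule image_subsetI)
    fix p assume p: "p \<in> Eset n d G G'"
    obtain a b where pe: "p = (a, b)" by (cases p)
    have r: "rewire G a b = G'" and a: "a \<in> stubs n d" and b: "b \<in> stubs n d" "b \<noteq> a" "b \<noteq> G a"
      using p pe unfolding Eset_def by auto
    have 1: "G' a = b" using rewire_facts(2)[OF G a b(1,2,3)] r by simp
    have 2: "rewire G' a (G a) = G" using rewire_facts(3)[OF G a b(1,2,3)] r by simp
    have 3: "G a \<in> stubs n d" "G a \<noteq> a" using graphsD(1,2)[OF G a] by simp_all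
    show "(\<lambda>(a, b). (a, G a)) p \<in> Eset n d G' G"
      unfolding pe Eset_def using 1 2 3 a b by auto
  qed
  show "finite (Eset n d G' G)"
    by (rule finite_subset[of _ "stubs n d \<times> stubs n d"]) (auto simp: Eset_def finite_stubs)
qed

lemma rewire_sym:
  assumes G: "G \<in> graphs n d" and G': "G' \<in> graphs n d"
  shows "(\<Sum>a\<in>stubs n d. \<Sum>b\<in>stubs n d - {a, G a}. if rewire G a b = G' then 1 else 0 :: real)
       = (\<Sum>a\<in>stubs n d. \<Sum>b\<in>stubs n d - {a, G' a}. if rewire G' a b = G then 1 else 0)"
proof -
  have "card (Eset n d G G') = card (Eset n d G' G)"
    using Eset_le[OF G G'] Eset_le[OF G' G] by simp
  moreover have "\<And>H H'. (\<Sum>a\<in>stubs n d. \<Sum>b\<in>stubs n d - {a, H a}. if rewire H a b = H' then 1 else 0 :: real)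
      = real (card (Eset n d H H'))"
    unfolding Eset_def by (rule count_sum) (simp_all add: finite_stubs)
  ultimately show ?thesis by simp
qed

lemma sum_two:
  fixes F :: "nat \<Rightarrow> real"
  assumes "x \<noteq> y" "x < n" "y < n" "\<And>z. z \<noteq> x \<Longrightarrow> z \<noteq> y \<Longrightarrow> F z = 0"
  shows "(\<Sum>z<n. F z) = F x + F y"
proof -
  have "(\<Sum>z<n. F z) = (\<Sum>z\<in>{x, y}. F z)"
    by (rule sum.mono_neutral_right) (use assms in auto)
  then show ?thesis using assms(1) by simp
qed

lemma base_dual:
  assumes G: "G \<in> graphs n d" and G': "G' \<in> graphs n d" and x: "x < n" and y: "y < n"
  shows "voter_gen n d \<nu> (\<lambda>z. Hd z (G', (x, y))) (G, \<eta>) = walk_stop_gen n d \<nu> (Hd (G, \<eta>)) (G', (x, y))"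
proof -
  have R: "rewire_gen n d \<nu> (\<lambda>z. Hd z (G', (x, y))) (G, \<eta>) = rewire_gen n d \<nu> (Hd (G, \<eta>)) (G', (x, y))"
  proof (cases "G = G'")
    case True
    show ?thesis unfolding rewire_gen_eq True
      by (intro sum.cong refl) auto
  next
    case False
    have "rewire_gen n d \<nu> (\<lambda>z. Hd z (G', (x, y))) (G, \<eta>)
        = rc n d \<nu> * hdv \<eta> x y * (\<Sum>a\<in>stubs n d. \<Sum>b\<in>stubs n d - {a, G a}. if rewire G a b = G' then 1 else 0)"
      unfolding rewire_gen_eq sum_distrib_left by (intro sum.cong refl) (simp add: False)
    also have "\<dots> = rc n d \<nu> * hdv \<eta> x y * (\<Sum>a\<in>stubs n d. \<Sum>b\<in>stubs n d - {a, G' a}. if rewire G' a b = G then 1 else 0)"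
      using rewire_sym[OF G G'] by simp
    also have "\<dots> = rewire_gen n d \<nu> (Hd (G, \<eta>)) (G', (x, y))"
      unfolding rewire_gen_eq sum_distrib_left by (intro sum.cong refl) (auto simp: False)
    finally show ?thesis .
  qed
  have Lc: "(\<Sum>z<n. \<Sum>i<d. (1 / real d) * (Hd (G, \<eta>(z := \<eta> (nbr G z i))) (G', (x, y)) - Hd (G, \<eta>) (G', (x, y))))
     = (if x = y then 0 else
           (\<Sum>i<d. (1 / real d) * (Hd (G, \<eta>) (G', (nbr G' x i, y)) - Hd (G, \<eta>) (G', (x, y))))
         + (\<Sum>i<d. (1 / real d) * (Hd (G, \<eta>) (G', (x, nbr G' y i)) - Hd (G, \<eta>) (G', (x, y)))))"
  proof (cases "G = G'")
    case False then show ?thesis by simp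
  next
    case True
    show ?thesis
    proof (cases "x = y")
      case True then show ?thesis by (simp add: hdv_def)
    next
      case xy: False
      have "(\<Sum>z<n. \<Sum>i<d. (1 / real d) * (Hd (G, \<eta>(z := \<eta> (nbr G z i))) (G', (x, y)) - Hd (G, \<eta>) (G', (x, y))))
         = (\<Sum>i<d. (1 / real d) * (Hd (G, \<eta>(x := \<eta> (nbr G x i))) (G', (x, y)) - Hd (G, \<eta>) (G', (x, y))))
         + (\<Sum>i<d. (1 / real d) * (Hd (G, \<eta>(y := \<eta> (nbr G y i))) (G', (x, y)) - Hd (G, \<eta>) (G', (x, y))))"
        by (rule sum_two[OF xy x y]) (simp add: hdv_def)
      then show ?thesis using xy True by (simp add: hdv_def)
    qed
  qed
  show ?thesis
    unfolding voter_gen_def walk_stop_gen_def split using R Lc by simp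
qed

lemma comm:
  assumes M: "lin M"
  shows "voter_gen n d \<nu> (\<lambda>z. M (H z) w0) (G, \<eta>) = M (\<lambda>w. voter_gen n d \<nu> (\<lambda>z. H z w) (G, \<eta>)) w0"
  unfolding voter_gen_def split rewire_gen_eq
  by (simp add: lin_add[OF M] lin_sum[OF M] lin_cmult[OF M] lin_diff[OF M] lin_div[OF M])

lemma dual_k:
  assumes G: "G \<in> graphs n d" and G': "G' \<in> graphs n d" and x: "x < n" and y: "y < n"
  shows "(voter_gen n d \<nu> ^^ k) (\<lambda>z. Hd z (G', (x, y))) (G, \<eta>) = (walk_stop_gen n d \<nu> ^^ k) (Hd (G, \<eta>)) (G', (x, y))"
  using G
proof (induction k arbitrary: G \<eta>)
  case 0 then show ?case by simp
next
  case (Suc k)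
  let ?V = "voter_gen n d \<nu>" and ?W = "walk_stop_gen n d \<nu>"
  have "(?V ^^ Suc k) (\<lambda>z. Hd z (G', (x, y))) (G, \<eta>) = ?V ((?V ^^ k) (\<lambda>z. Hd z (G', (x, y)))) (G, \<eta>)"
    by simp
  also have "\<dots> = ?V (\<lambda>z. (?W ^^ k) (Hd z) (G', (x, y))) (G, \<eta>)"
  proof -
    have "\<forall>s\<in>graphs n d \<times> UNIV. (?V ^^ k) (\<lambda>z. Hd z (G', (x, y))) s = (\<lambda>z. (?W ^^ k) (Hd z) (G', (x, y))) s"
    proof
      fix s :: "graph \<times> (nat \<Rightarrow> bool)" assume "s \<in> graphs n d \<times> UNIV"
      then obtain G0 \<eta>0 where s: "s = (G0, \<eta>0)" "G0 \<in> graphs n d" by auto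
      show "(?V ^^ k) (\<lambda>z. Hd z (G', (x, y))) s = (\<lambda>z. (?W ^^ k) (Hd z) (G', (x, y))) s"
        unfolding s(1) using Suc.IH[OF s(2)] by simp
    qed
    then show ?thesis using voter_loc[of n d \<nu>] Suc.prems unfolding loc_def by simp
  qed
  also have "\<dots> = (?W ^^ k) (\<lambda>w. ?V (\<lambda>z. Hd z w) (G, \<eta>)) (G', (x, y))"
    by (rule comm[OF lin_funpow[OF walk_gen_lin]])
  also have "\<dots> = (?W ^^ k) (?W (Hd (G, \<eta>))) (G', (x, y))"
  proof (rule loc_funpow[OF walk_loc])
    show "\<forall>s\<in>graphs n d \<times> ({..<n} \<times> {..<n}). ?V (\<lambda>z. Hd z s) (G, \<eta>) = ?W (Hd (G, \<eta>)) s"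
    proof
      fix s assume "s \<in> graphs n d \<times> ({..<n} \<times> {..<n})"
      then obtain G1 X Y where s: "s = (G1, (X, Y))" "G1 \<in> graphs n d" "X < n" "Y < n" by auto
      show "?V (\<lambda>z. Hd z s) (G, \<eta>) = ?W (Hd (G, \<eta>)) s"
        unfolding s(1) by (rule base_dual[OF Suc.prems s(2,3,4)])
    qed
    show "(G', (x, y)) \<in> graphs n d \<times> ({..<n} \<times> {..<n})" using G' x y by simp
  qed
  also have "\<dots> = (?W ^^ Suc k) (Hd (G, \<eta>)) (G', (x, y))"
    by (simp only: funpow_Suc_right comp_apply)
  finally show ?case .
qed




lemma sg_cmult:
  assumes "lin L" "summable (\<lambda>k. t ^ k / fact k * (L ^^ k) f s)"
  shows "semigroup L t (\<lambda>s. c * f s) s = c * semigroup L t f s"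
  using sg_lincomb[OF assms(1), of "{0::nat}" t "\<lambda>_. f" s "\<lambda>_. c"] assms(2) by simp

lemma sg_diff:
  assumes "lin L" "summable (\<lambda>k. t ^ k / fact k * (L ^^ k) f s)" "summable (\<lambda>k. t ^ k / fact k * (L ^^ k) g s)"
  shows "semigroup L t (\<lambda>s. f s - g s) s = semigroup L t f s - semigroup L t g s"
proof -
  have "semigroup L t (\<lambda>s. \<Sum>i\<in>{0::nat, 1}. (if i = 0 then 1 else -1) * (if i = 0 then f else g) s) s
      = (\<Sum>i\<in>{0::nat, 1}. (if i = 0 then 1 else -1) * semigroup L t (if i = 0 then f else g) s)"
    by (rule sg_lincomb[OF assms(1)]) (use assms(2,3) in auto)
  then show ?thesis by simp
qed

definition Psi :: "(nat \<Rightarrow> bool) \<Rightarrow> graph \<times> (nat \<times> nat) \<Rightarrow> real" where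
  "Psi \<xi> w = hdv \<xi> (fst (snd w)) (snd (snd w))"

lemma hdv_bound: "\<bar>hdv \<eta> X Y\<bar> \<le> 1" "hdv \<eta> X Y \<ge> 0" "hdv \<eta> X Y \<le> 1"
  by (simp_all add: hdv_def)

lemma sum_delta_mult:
  assumes "finite S" "G0 \<in> S"
  shows "(\<Sum>G'\<in>S. (a G' :: real) * (if G0 = G' then h else 0)) = a G0 * h"
proof -
  have "(\<Sum>G'\<in>S. (a G' :: real) * (if G0 = G' then h else 0)) = (\<Sum>G'\<in>S. if G0 = G' then a G0 * h else 0)"
    by (rule sum.cong) auto
  also have "\<dots> = a G0 * h" using sum.delta'[OF assms(1), of G0 "\<lambda>_. a G0 * h"] assms(2) by simp
  finally show ?thesis .
qed

lemma avg_dual_k: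
  assumes x: "x < n" and y: "y < n"
  shows "(\<Sum>G\<in>graphs n d. (voter_gen n d \<nu> ^^ k) (\<lambda>z. \<alpha> (fst z) * hdv (snd z) x y) (G, \<xi>))
       = (\<Sum>G'\<in>graphs n d. \<alpha> G' * (walk_stop_gen n d \<nu> ^^ k) (Psi \<xi>) (G', (x, y)))"
proof -
  let ?V = "voter_gen n d \<nu>" and ?W = "walk_stop_gen n d \<nu>" and ?S = "graphs n d"
  have linV: "lin (?V ^^ k)" and linW: "lin (?W ^^ k)" by (simp_all add: lin_funpow voter_gen_lin walk_gen_lin)
  have A: "(?V ^^ k) (\<lambda>z. \<alpha> (fst z) * hdv (snd z) x y) (G, \<xi>)
        = (\<Sum>G'\<in>?S. \<alpha> G' * (?W ^^ k) (Hd (G, \<xi>)) (G', (x, y)))" if G: "G \<in> ?S" for G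
  proof -
    have "(?V ^^ k) (\<lambda>z. \<alpha> (fst z) * hdv (snd z) x y) (G, \<xi>)
        = (?V ^^ k) (\<lambda>z. \<Sum>G'\<in>?S. \<alpha> G' * Hd z (G', (x, y))) (G, \<xi>)"
    proof (rule loc_funpow[OF voter_loc])
      show "\<forall>s\<in>?S \<times> UNIV. \<alpha> (fst s) * hdv (snd s) x y = (\<Sum>G'\<in>?S. \<alpha> G' * Hd s (G', (x, y)))"
      proof
        fix s :: "graph \<times> (nat \<Rightarrow> bool)" assume "s \<in> ?S \<times> UNIV"
        then obtain G0 \<eta>0 where s: "s = (G0, \<eta>0)" "G0 \<in> ?S" by auto
        show "\<alpha> (fst s) * hdv (snd s) x y = (\<Sum>G'\<in>?S. \<alpha> G' * Hd s (G', (x, y)))"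
          unfolding s(1) Hd_simp using sum_delta_mult[OF finite_graphs s(2)] by simp
      qed
      show "(G, \<xi>) \<in> ?S \<times> UNIV" using G by simp
    qed
    also have "\<dots> = (\<Sum>G'\<in>?S. \<alpha> G' * (?V ^^ k) (\<lambda>z. Hd z (G', (x, y))) (G, \<xi>))"
      by (simp add: lin_sum[OF linV] lin_cmult[OF linV])
    also have "\<dots> = (\<Sum>G'\<in>?S. \<alpha> G' * (?W ^^ k) (Hd (G, \<xi>)) (G', (x, y)))"
      by (intro sum.cong refl) (simp add: dual_k[OF G _ x y])
    finally show ?thesis .
  qed
  have B: "(\<Sum>G\<in>?S. (?W ^^ k) (Hd (G, \<xi>)) (G', (x, y))) = (?W ^^ k) (Psi \<xi>) (G', (x, y))"
    if G': "G' \<in> ?S" for G'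
  proof -
    have "(\<Sum>G\<in>?S. (?W ^^ k) (Hd (G, \<xi>)) (G', (x, y))) = (?W ^^ k) (\<lambda>w. \<Sum>G\<in>?S. Hd (G, \<xi>) w) (G', (x, y))"
      by (simp add: lin_sum[OF linW])
    also have "\<dots> = (?W ^^ k) (Psi \<xi>) (G', (x, y))"
    proof (rule loc_funpow[OF walk_loc])
      show "\<forall>s\<in>?S \<times> ({..<n} \<times> {..<n}). (\<Sum>G\<in>?S. Hd (G, \<xi>) s) = Psi \<xi> s"
      proof
        fix s assume "s \<in> ?S \<times> ({..<n} \<times> {..<n})"
        then obtain G1 X Y where s: "s = (G1, (X, Y))" "G1 \<in> ?S" by auto
        have "(\<Sum>G\<in>?S. Hd (G, \<xi>) s) = (\<Sum>G\<in>?S. if G = G1 then hdv \<xi> X Y else 0)"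
          unfolding s(1) Hd_simp ..
        also have "\<dots> = hdv \<xi> X Y" using s(2) finite_graphs by (simp add: sum.delta)
        finally show "(\<Sum>G\<in>?S. Hd (G, \<xi>) s) = Psi \<xi> s" unfolding s(1) Psi_def by simp
      qed
      show "(G', (x, y)) \<in> ?S \<times> ({..<n} \<times> {..<n})" using G' x y by simp
    qed
    finally show ?thesis .
  qed
  have "(\<Sum>G\<in>?S. (?V ^^ k) (\<lambda>z. \<alpha> (fst z) * hdv (snd z) x y) (G, \<xi>))
      = (\<Sum>G\<in>?S. \<Sum>G'\<in>?S. \<alpha> G' * (?W ^^ k) (Hd (G, \<xi>)) (G', (x, y)))"
    by (intro sum.cong refl A)
  also have "\<dots> = (\<Sum>G'\<in>?S. \<Sum>G\<in>?S. \<alpha> G' * (?W ^^ k) (Hd (G, \<xi>)) (G', (x, y)))"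
    by (rule sum.swap)
  also have "\<dots> = (\<Sum>G'\<in>?S. \<alpha> G' * (?W ^^ k) (Psi \<xi>) (G', (x, y)))"
    by (intro sum.cong refl) (simp add: sum_distrib_left[symmetric] B)
  finally show ?thesis .
qed


lemma sumV:
  assumes "\<nu> \<ge> 0" "d * n \<ge> 2" "d \<ge> 1" "\<forall>s. \<bar>f s\<bar> \<le> B"
  shows "summable (\<lambda>k. t ^ k / fact k * (voter_gen n d \<nu> ^^ k) f s)"
  by (rule summable_sg(1)[OF voter_bnd[OF assms(1-3)] CV_nonneg[OF assms(1,2)] assms(4)])

lemma sumW:
  assumes "\<nu> \<ge> 0" "d * n \<ge> 2" "d \<ge> 1" "\<forall>s. \<bar>f s\<bar> \<le> B"
  shows "summable (\<lambda>k. t ^ k / fact k * (walk_stop_gen n d \<nu> ^^ k) f s)"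
  by (rule summable_sg(1)[OF walk_bnd[OF assms(1-3)] CV_nonneg[OF assms(1,2)] assms(4)])

lemma alpha_hd_bound: "\<forall>G. \<bar>\<alpha> G\<bar> \<le> (1::real) \<Longrightarrow> \<forall>s. \<bar>\<alpha> (fst s) * hdv (snd s) x y\<bar> \<le> 1"
proof
  fix s assume a: "\<forall>G. \<bar>\<alpha> G\<bar> \<le> (1::real)"
  have "\<bar>\<alpha> (fst s)\<bar> * \<bar>hdv (snd s) x y\<bar> \<le> 1"
    using a hdv_bound(1)[of "snd s" x y] by (intro mult_le_one) auto
  then show "\<bar>\<alpha> (fst s) * hdv (snd s) x y\<bar> \<le> 1" by (simp add: abs_mult)
qed

lemma Psi_bound: "\<forall>s. \<bar>Psi \<xi> s\<bar> \<le> 1"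
  unfolding Psi_def using hdv_bound(1) by blast

lemma avg_dual_sg:
  assumes prm: "\<nu> \<ge> 0" "d * n \<ge> 2" "d \<ge> 1" and x: "x < n" and y: "y < n" and a: "\<forall>G. \<bar>\<alpha> G\<bar> \<le> 1"
  shows "(\<Sum>G\<in>graphs n d. semigroup (voter_gen n d \<nu>) t (\<lambda>z. \<alpha> (fst z) * hdv (snd z) x y) (G, \<xi>))
       = (\<Sum>G'\<in>graphs n d. \<alpha> G' * semigroup (walk_stop_gen n d \<nu>) t (Psi \<xi>) (G', (x, y)))"
proof -
  let ?V = "voter_gen n d \<nu>" and ?W = "walk_stop_gen n d \<nu>" and ?S = "graphs n d"
  let ?F = "\<lambda>z. \<alpha> (fst z) * hdv (snd z) x y"
  have sV: "summable (\<lambda>k. t ^ k / fact k * (?V ^^ k) ?F s)" for s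
    by (rule sumV[OF prm alpha_hd_bound[OF a]])
  have sW: "summable (\<lambda>k. t ^ k / fact k * (?W ^^ k) (Psi \<xi>) s)" for s
    by (rule sumW[OF prm Psi_bound])
  have "(\<Sum>G\<in>?S. semigroup ?V t ?F (G, \<xi>)) = (\<Sum>k. \<Sum>G\<in>?S. t ^ k / fact k * (?V ^^ k) ?F (G, \<xi>))"
    unfolding semigroup_def by (rule suminf_sum[symmetric]) (rule sV)
  also have "\<dots> = (\<Sum>k. \<Sum>G'\<in>?S. \<alpha> G' * (t ^ k / fact k * (?W ^^ k) (Psi \<xi>) (G', (x, y))))"
  proof (rule arg_cong[where f = suminf], rule ext)
    fix k
    have "(\<Sum>G\<in>?S. t ^ k / fact k * (?V ^^ k) ?F (G, \<xi>)) = t ^ k / fact k * (\<Sum>G\<in>?S. (?V ^^ k) ?F (G, \<xi>))"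
      by (simp add: sum_distrib_left)
    also have "\<dots> = t ^ k / fact k * (\<Sum>G'\<in>?S. \<alpha> G' * (?W ^^ k) (Psi \<xi>) (G', (x, y)))"
      by (simp only: avg_dual_k[OF x y])
    also have "\<dots> = (\<Sum>G'\<in>?S. \<alpha> G' * (t ^ k / fact k * (?W ^^ k) (Psi \<xi>) (G', (x, y))))"
      by (simp add: sum_distrib_left mult_ac)
    finally show "(\<Sum>G\<in>?S. t ^ k / fact k * (?V ^^ k) ?F (G, \<xi>))
        = (\<Sum>G'\<in>?S. \<alpha> G' * (t ^ k / fact k * (?W ^^ k) (Psi \<xi>) (G', (x, y))))" .
  qed
  also have "\<dots> = (\<Sum>G'\<in>?S. \<Sum>k. \<alpha> G' * (t ^ k / fact k * (?W ^^ k) (Psi \<xi>) (G', (x, y))))"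
    by (rule suminf_sum) (rule summable_mult, rule sW)
  also have "\<dots> = (\<Sum>G'\<in>?S. \<alpha> G' * semigroup ?W t (Psi \<xi>) (G', (x, y)))"
    unfolding semigroup_def by (intro sum.cong refl) (rule suminf_mult, rule sW)
  finally show ?thesis .
qed

lemma gen_dual:
  assumes prm: "\<nu> \<ge> 0" "d * n \<ge> 2" "d \<ge> 1" and Q: "finite Q"
    and xy: "\<And>q. q \<in> Q \<Longrightarrow> xq q < n \<and> yq q < n" and a: "\<And>q. \<forall>G. \<bar>\<alpha> q G\<bar> \<le> 1"
    and F: "\<And>G \<eta>. G \<in> graphs n d \<Longrightarrow> F (G, \<eta>) = (\<Sum>q\<in>Q. c q * (\<alpha> q G * hdv \<eta> (xq q) (yq q)))"
  shows "(\<Sum>G\<in>graphs n d. semigroup (voter_gen n d \<nu>) t F (G, \<xi>))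
       = (\<Sum>q\<in>Q. c q * (\<Sum>G'\<in>graphs n d. \<alpha> q G' * semigroup (walk_stop_gen n d \<nu>) t (Psi \<xi>) (G', (xq q, yq q))))"
proof -
  let ?V = "voter_gen n d \<nu>" and ?W = "walk_stop_gen n d \<nu>" and ?S = "graphs n d"
  let ?Fq = "\<lambda>q z. \<alpha> q (fst z) * hdv (snd z) (xq q) (yq q)"
  have "semigroup ?V t F (G, \<xi>) = (\<Sum>q\<in>Q. c q * semigroup ?V t (?Fq q) (G, \<xi>))" if G: "G \<in> ?S" for G
  proof -
    have "semigroup ?V t F (G, \<xi>) = semigroup ?V t (\<lambda>z. \<Sum>q\<in>Q. c q * ?Fq q z) (G, \<xi>)"
    proof (rule loc_sg[OF voter_loc])
      show "\<forall>s\<in>?S \<times> UNIV. F s = (\<Sum>q\<in>Q. c q * ?Fq q s)"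
      proof
        fix s :: "graph \<times> (nat \<Rightarrow> bool)" assume "s \<in> ?S \<times> UNIV"
        then obtain G0 \<eta>0 where s: "s = (G0, \<eta>0)" "G0 \<in> ?S" by auto
        show "F s = (\<Sum>q\<in>Q. c q * ?Fq q s)" unfolding s(1) using F[OF s(2)] by simp
      qed
      show "(G, \<xi>) \<in> ?S \<times> UNIV" using G by simp
    qed
    also have "\<dots> = (\<Sum>q\<in>Q. c q * semigroup ?V t (?Fq q) (G, \<xi>))"
      by (rule sg_lincomb[OF voter_gen_lin Q]) (rule sumV[OF prm alpha_hd_bound[OF a]])
    finally show ?thesis .
  qed
  then have "(\<Sum>G\<in>?S. semigroup ?V t F (G, \<xi>)) = (\<Sum>G\<in>?S. \<Sum>q\<in>Q. c q * semigroup ?V t (?Fq q) (G, \<xi>))"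
    by (intro sum.cong refl) simp
  also have "\<dots> = (\<Sum>q\<in>Q. c q * (\<Sum>G\<in>?S. semigroup ?V t (?Fq q) (G, \<xi>)))"
    by (subst sum.swap) (simp add: sum_distrib_left)
  also have "\<dots> = (\<Sum>q\<in>Q. c q * (\<Sum>G'\<in>?S. \<alpha> q G' * semigroup ?W t (Psi \<xi>) (G', (xq q, yq q))))"
    by (intro sum.cong refl arg_cong[where f = "\<lambda>r. c _ * r"] avg_dual_sg[OF prm] a) (use xy in auto)
  finally show ?thesis .
qed




definition wt :: "nat \<Rightarrow> real \<Rightarrow> (nat \<Rightarrow> bool) \<Rightarrow> real" where
  "wt n u \<xi> = u ^ card {x\<in>{..<n}. \<xi> x} * (1 - u) ^ card {x\<in>{..<n}. \<not> \<xi> x}"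

lemma bij_cfg: "bij_betw (\<lambda>B x. x \<in> B) (Pow {..<n}) (configs n)"
proof (rule bij_betw_byWitness[where f' = "\<lambda>\<xi>. {x. \<xi> x}"])
  show "\<forall>a\<in>Pow {..<n}. {x. x \<in> a} = a" by simp
  show "\<forall>a'\<in>configs n. (\<lambda>x. x \<in> {x. a' x}) = a'" by simp
  show "(\<lambda>B x. x \<in> B) ` Pow {..<n} \<subseteq> configs n" unfolding configs_def by auto
  show "(\<lambda>\<xi>. {x. \<xi> x}) ` configs n \<subseteq> Pow {..<n}" unfolding configs_def by auto
qed

lemma finite_configs: "finite (configs n)"
  using bij_betw_finite[OF bij_cfg] by simp

lemma configs_ne: "(\<lambda>x. False) \<in> configs n"
  unfolding configs_def by simp

lemma bern_gen:
  fixes u :: real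
  assumes I: "finite I" and X: "X \<in> I" and Y: "Y \<in> I" and XY: "X \<noteq> Y"
  shows "(\<Sum>B\<in>Pow I. (if X \<in> B \<and> Y \<notin> B then 1 else 0) * (u ^ card B * (1 - u) ^ card (I - B))) = u * (1 - u)"
proof -
  define f where "f i = (if i = Y then 0 else u)" for i
  define g where "g i = (if i = X then 0 else 1 - u)" for i
  have tm: "(\<Prod>i\<in>B. f i) * (\<Prod>i\<in>I - B. g i)
      = (if X \<in> B \<and> Y \<notin> B then 1 else 0) * (u ^ card B * (1 - u) ^ card (I - B))" if B: "B \<in> Pow I" for B
  proof -
    have fB: "finite B" using B I by (auto intro: finite_subset)
    have PB: "(\<Prod>i\<in>B. f i) = (if Y \<in> B then 0 else u ^ card B)"
    proof (cases "Y \<in> B")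
      case True
      have "(\<Prod>i\<in>B. f i) = 0" by (rule prod_zero[OF fB]) (use True in \<open>auto simp: f_def\<close>)
      then show ?thesis using True by simp
    next
      case False
      then have "(\<Prod>i\<in>B. f i) = (\<Prod>i\<in>B. u)" unfolding f_def by (intro prod.cong) auto
      then show ?thesis using False by simp
    qed
    have PC: "(\<Prod>i\<in>I - B. g i) = (if X \<in> B then (1 - u) ^ card (I - B) else 0)"
    proof (cases "X \<in> B")
      case False
      then have "X \<in> I - B" using X by simp
      have "(\<Prod>i\<in>I - B. g i) = 0" by (rule prod_zero) (use I \<open>X \<in> I - B\<close> in \<open>auto simp: g_def\<close>)
      then show ?thesis using False by simp
    next
      case True
      then have "(\<Prod>i\<in>I - B. g i) = (\<Prod>i\<in>I - B. 1 - u)" unfolding g_def by (intro prod.cong) auto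
      then show ?thesis using True by simp
    qed
    show ?thesis unfolding PB PC by simp
  qed
  have "(\<Prod>i\<in>I. f i + g i) = (\<Sum>B\<in>Pow I. (\<Prod>i\<in>B. f i) * (\<Prod>i\<in>I - B. g i))"
    by (rule prod_add[OF I])
  also have "\<dots> = (\<Sum>B\<in>Pow I. (if X \<in> B \<and> Y \<notin> B then 1 else 0) * (u ^ card B * (1 - u) ^ card (I - B)))"
    by (intro sum.cong refl tm)
  finally have eq: "(\<Sum>B\<in>Pow I. (if X \<in> B \<and> Y \<notin> B then 1 else 0) * (u ^ card B * (1 - u) ^ card (I - B)))
      = (\<Prod>i\<in>I. f i + g i)" by simp
  have "(\<Prod>i\<in>I. f i + g i) = (f X + g X) * (\<Prod>i\<in>I - {X}. f i + g i)"
    by (rule prod.remove[OF I X])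
  also have "(\<Prod>i\<in>I - {X}. f i + g i) = (f Y + g Y) * (\<Prod>i\<in>I - {X} - {Y}. f i + g i)"
    by (rule prod.remove) (use I Y XY in auto)
  also have "(\<Prod>i\<in>I - {X} - {Y}. f i + g i) = 1"
    by (rule prod.neutral) (auto simp: f_def g_def)
  finally show ?thesis unfolding eq using XY by (simp add: f_def g_def)
qed

lemma bern:
  fixes u :: real
  assumes X: "X < n" and Y: "Y < n"
  shows "(\<Sum>\<xi>\<in>configs n. wt n u \<xi> * hdv \<xi> X Y) = (if X = Y then 0 else 2 * u * (1 - u))"
proof -
  have "(\<Sum>\<xi>\<in>configs n. wt n u \<xi> * hdv \<xi> X Y) = (\<Sum>B\<in>Pow {..<n}. wt n u (\<lambda>x. x \<in> B) * hdv (\<lambda>x. x \<in> B) X Y)"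
    by (rule sum.reindex_bij_betw[OF bij_cfg, symmetric])
  also have "\<dots> = (\<Sum>B\<in>Pow {..<n}. ((if X \<in> B \<and> Y \<notin> B then 1 else 0) + (if Y \<in> B \<and> X \<notin> B then 1 else 0))
        * (u ^ card B * (1 - u) ^ card ({..<n} - B)))"
  proof (intro sum.cong refl)
    fix B assume B: "B \<in> Pow {..<n}"
    have c1: "{x\<in>{..<n}. x \<in> B} = B" using B by auto
    have c2: "{x\<in>{..<n}. x \<notin> B} = {..<n} - B" by auto
    show "wt n u (\<lambda>x. x \<in> B) * hdv (\<lambda>x. x \<in> B) X Y = ((if X \<in> B \<and> Y \<notin> B then 1 else 0) + (if Y \<in> B \<and> X \<notin> B then 1 else 0))
        * (u ^ card B * (1 - u) ^ card ({..<n} - B))"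
      unfolding wt_def c1 c2 hdv_def by auto
  qed
  also have "\<dots> = (if X = Y then 0 else 2 * u * (1 - u))"
  proof (cases "X = Y")
    case True then show ?thesis by simp
  next
    case False
    have "(\<Sum>B\<in>Pow {..<n}. ((if X \<in> B \<and> Y \<notin> B then 1 else 0) + (if Y \<in> B \<and> X \<notin> B then 1 else 0))
        * (u ^ card B * (1 - u) ^ card ({..<n} - B)))
      = (\<Sum>B\<in>Pow {..<n}. (if X \<in> B \<and> Y \<notin> B then 1 else 0) * (u ^ card B * (1 - u) ^ card ({..<n} - B)))
      + (\<Sum>B\<in>Pow {..<n}. (if Y \<in> B \<and> X \<notin> B then 1 else 0) * (u ^ card B * (1 - u) ^ card ({..<n} - B)))"
      by (simp add: distrib_right sum.distrib)
    also have "\<dots> = u * (1 - u) + u * (1 - u)"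
      using bern_gen[of "{..<n}" X Y u] bern_gen[of "{..<n}" Y X u] X Y False by simp
    finally show ?thesis using False by simp
  qed
  finally show ?thesis .
qed




definition Mt :: "graph \<times> (nat \<times> nat) \<Rightarrow> real" where
  "Mt = (\<lambda>(G', (X, Y)). if X \<noteq> Y then 1 else 0)"

lemma Mt_simp[simp]: "Mt (G, (X, Y)) = (if X \<noteq> Y then 1 else 0)"
  by (simp add: Mt_def)

lemma meet_tail_Mt: "meet_tail n d \<nu> t G x y = semigroup (walk_stop_gen n d \<nu>) t Mt (G, (x, y))"
  unfolding meet_tail_def Mt_def ..

lemma Mt_bound: "\<forall>s. \<bar>Mt s\<bar> \<le> 1"
proof
  fix s :: "graph \<times> (nat \<times> nat)"
  obtain G X Y where "s = (G, (X, Y))" by (cases s) auto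
  then show "\<bar>Mt s\<bar> \<le> 1" by simp
qed

lemma bern_walk:
  assumes prm: "\<nu> \<ge> 0" "d * n \<ge> 2" "d \<ge> 1" and G': "G' \<in> graphs n d" and x: "x < n" and y: "y < n"
  shows "(\<Sum>\<xi>\<in>configs n. wt n u \<xi> * semigroup (walk_stop_gen n d \<nu>) t (Psi \<xi>) (G', (x, y)))
       = 2 * u * (1 - u) * meet_tail n d \<nu> t G' x y"
proof -
  let ?W = "walk_stop_gen n d \<nu>"
  have "(\<Sum>\<xi>\<in>configs n. wt n u \<xi> * semigroup ?W t (Psi \<xi>) (G', (x, y)))
      = semigroup ?W t (\<lambda>w. \<Sum>\<xi>\<in>configs n. wt n u \<xi> * Psi \<xi> w) (G', (x, y))"
    by (rule sg_lincomb[OF walk_gen_lin finite_configs, symmetric]) (rule sumW[OF prm Psi_bound])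
  also have "\<dots> = semigroup ?W t (\<lambda>w. 2 * u * (1 - u) * Mt w) (G', (x, y))"
  proof (rule loc_sg[OF walk_loc])
    show "\<forall>s\<in>graphs n d \<times> ({..<n} \<times> {..<n}). (\<Sum>\<xi>\<in>configs n. wt n u \<xi> * Psi \<xi> s) = 2 * u * (1 - u) * Mt s"
    proof
      fix s assume "s \<in> graphs n d \<times> ({..<n} \<times> {..<n})"
      then obtain G1 X Y where s: "s = (G1, (X, Y))" "X < n" "Y < n" by auto
      show "(\<Sum>\<xi>\<in>configs n. wt n u \<xi> * Psi \<xi> s) = 2 * u * (1 - u) * Mt s"
        unfolding s(1) Psi_def using bern[OF s(2,3), of u] by simp
    qed
    show "(G', (x, y)) \<in> graphs n d \<times> ({..<n} \<times> {..<n})" using G' x y by simp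
  qed
  also have "\<dots> = 2 * u * (1 - u) * semigroup ?W t Mt (G', (x, y))"
    by (rule sg_cmult[OF walk_gen_lin sumW[OF prm Mt_bound]])
  finally show ?thesis unfolding meet_tail_Mt .
qed

lemma LW_nonneg: "\<nu> \<ge> 0 \<Longrightarrow> d * n \<ge> 2 \<Longrightarrow> LW n d \<nu> \<ge> 0"
  unfolding LW_def using rc_nonneg[of \<nu> d n] by simp

lemma sgW_nonneg:
  assumes prm: "\<nu> \<ge> 0" "d * n \<ge> 2" "d \<ge> 1" and t: "t \<ge> 0"
    and f0: "\<forall>s. 0 \<le> f s" and f1: "\<forall>s. f s \<le> 1"
  shows "semigroup (walk_stop_gen n d \<nu>) t f s \<ge> 0"
  by (rule sg_nonneg[OF walk_gen_lin walk_bnd[OF prm] CV_nonneg[OF prm(1,2)] LW_nonneg[OF prm(1,2)]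
        walk_pos[OF prm] f0 f1 t])

lemma mt_nonneg:
  assumes prm: "\<nu> \<ge> 0" "d * n \<ge> 2" "d \<ge> 1" and t: "t \<ge> 0"
  shows "meet_tail n d \<nu> t G x y \<ge> 0"
  unfolding meet_tail_Mt
proof (rule sgW_nonneg[OF prm t])
  show "\<forall>s. 0 \<le> Mt s" "\<forall>s. Mt s \<le> 1"
  proof -
    have "0 \<le> Mt s \<and> Mt s \<le> 1" for s
    proof -
      obtain G X Y where "s = (G, (X, Y))" by (cases s) auto
      then show ?thesis by simp
    qed
    then show "\<forall>s. 0 \<le> Mt s" "\<forall>s. Mt s \<le> 1" by auto
  qed
qed

lemma psi_le_mt:
  assumes prm: "\<nu> \<ge> 0" "d * n \<ge> 2" "d \<ge> 1" and t: "t \<ge> 0"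
  shows "semigroup (walk_stop_gen n d \<nu>) t (Psi \<xi>) (G, (x, y)) \<le> meet_tail n d \<nu> t G x y"
proof -
  let ?W = "walk_stop_gen n d \<nu>"
  have b: "0 \<le> Mt s - Psi \<xi> s \<and> Mt s - Psi \<xi> s \<le> 1" for s
  proof -
    obtain G X Y where "s = (G, (X, Y))" by (cases s) auto
    then show ?thesis by (simp add: Psi_def hdv_def)
  qed
  have "semigroup ?W t (\<lambda>s. Mt s - Psi \<xi> s) (G, (x, y)) \<ge> 0"
    by (rule sgW_nonneg[OF prm t]) (use b in auto)
  moreover have "semigroup ?W t (\<lambda>s. Mt s - Psi \<xi> s) (G, (x, y))
      = semigroup ?W t Mt (G, (x, y)) - semigroup ?W t (Psi \<xi>) (G, (x, y))"
    by (rule sg_diff[OF walk_gen_lin sumW[OF prm Mt_bound] sumW[OF prm Psi_bound]])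
  ultimately show ?thesis unfolding meet_tail_Mt by simp
qed

lemma od_id:
  assumes n: "n \<ge> 1"
  shows "opinion_density n \<eta> * (1 - opinion_density n \<eta>)
       = (\<Sum>q\<in>{..<n} \<times> {..<n}. 1 / (2 * real n ^ 2) * (1 * hdv \<eta> (fst q) (snd q)))"
proof -
  define e where "e x = (if \<eta> x then 1 else 0 :: real)" for x
  define k where "k = (\<Sum>x<n. e x)"
  have h: "hdv \<eta> x y = e x + e y - 2 * e x * e y" for x y by (simp add: hdv_def e_def)
  have inner: "(\<Sum>y<n. e x + e y - 2 * e x * e y) = real n * e x + k - 2 * e x * k" for x
    by (simp add: sum.distrib sum_subtractf sum_distrib_left[symmetric] k_def mult.assoc)
  have outer: "(\<Sum>x<n. real n * e x + k - 2 * e x * k) = real n * k + real n * k - 2 * k * k"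
    by (simp add: sum.distrib sum_subtractf sum_distrib_left[symmetric] sum_distrib_right[symmetric] k_def)
  have "(\<Sum>q\<in>{..<n} \<times> {..<n}. 1 / (2 * real n ^ 2) * (1 * hdv \<eta> (fst q) (snd q)))
      = 1 / (2 * real n ^ 2) * (\<Sum>x<n. \<Sum>y<n. hdv \<eta> x y)"
    by (simp add: sum_distrib_left sum.cartesian_product split_def)
  also have "\<dots> = 1 / (2 * real n ^ 2) * (real n * k + real n * k - 2 * k * k)"
    unfolding h inner outer ..
  also have "\<dots> = k / real n * (1 - k / real n)"
    using n by (simp add: field_simps power2_eq_square)
  also have "k = (\<Sum>x<n. if \<eta> x then 1 else 0)" unfolding k_def e_def ..
  finally show ?thesis unfolding opinion_density_def by simp
qed




definition Jset :: "nat \<Rightarrow> nat \<Rightarrow> (nat \<times> nat \<times> nat \<times> nat) set" where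
  "Jset n d = Sigma {..<n} (\<lambda>x. Sigma ({..<n} - {x}) (\<lambda>y. {..<d} \<times> {..<d}))"

definition aJ :: "nat \<times> nat \<times> nat \<times> nat \<Rightarrow> graph \<Rightarrow> real" where
  "aJ q G = (if G (fst q, fst (snd (snd q))) = (fst (snd q), snd (snd (snd q))) then 1 else 0)"

lemma finite_Jset: "finite (Jset n d)"
  unfolding Jset_def by (intro finite_SigmaI) auto

lemma J_sum: "(\<Sum>q\<in>Jset n d. f q) = (\<Sum>x<n. \<Sum>y\<in>{..<n} - {x}. \<Sum>i<d. \<Sum>j<d. f (x, y, i, j))"
  unfolding Jset_def by (simp add: sum.Sigma split_def)

lemma Jset_mem: "q \<in> Jset n d \<Longrightarrow> fst q < n \<and> fst (snd q) < n"
  unfolding Jset_def by auto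

lemma aJ_bound: "\<forall>G. \<bar>aJ q G\<bar> \<le> 1"
  unfolding aJ_def by simp


lemma inner_J:
  assumes G: "G \<in> graphs n d" and x: "x < n" and i: "i < d"
  shows "(\<Sum>y\<in>{..<n} - {x}. \<Sum>j<d. aJ (x, y, i, j) G * hdv \<eta> x y) = hdv \<eta> x (nbr G x i)"
proof -
  obtain y0 j0 where g: "G (x, i) = (y0, j0)" by (cases "G (x, i)") auto
  have "(x, i) \<in> stubs n d" using x i by (simp add: stubs_def)
  then have "(y0, j0) \<in> stubs n d" using graphsD(1)[OF G] g by metis
  then have y0: "y0 < n" and j0: "j0 < d" by (auto simp: stubs_def)
  have a: "(\<Sum>j<d. aJ (x, y, i, j) G * hdv \<eta> x y) = (if y = y0 then hdv \<eta> x y else 0)" for y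
  proof (cases "y = y0")
    case True
    have "(\<Sum>j<d. aJ (x, y, i, j) G * hdv \<eta> x y) = (\<Sum>j<d. if j0 = j then hdv \<eta> x y else 0)"
      by (intro sum.cong refl) (simp add: aJ_def g True)
    also have "\<dots> = hdv \<eta> x y" using j0 by simp
    finally show ?thesis using True by simp
  next
    case False
    then show ?thesis by (simp add: aJ_def g)
  qed
  have "(\<Sum>y\<in>{..<n} - {x}. \<Sum>j<d. aJ (x, y, i, j) G * hdv \<eta> x y) = (\<Sum>y\<in>{..<n} - {x}. if y = y0 then hdv \<eta> x y else 0)"
    by (intro sum.cong refl a)
  also have "\<dots> = (if y0 \<in> {..<n} - {x} then hdv \<eta> x y0 else 0)" by (simp add: sum.delta)
  also have "\<dots> = hdv \<eta> x y0" using y0 by (auto simp: hdv_def)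
  finally show ?thesis by (simp add: nbr_def g)
qed

lemma disc_id:
  assumes G: "G \<in> graphs n d"
  shows "discordance n d G \<eta> = (\<Sum>q\<in>Jset n d. 1 / real (d * n) * (aJ q G * hdv \<eta> (fst q) (fst (snd q))))"
proof -
  define e where "e x = (if \<eta> x then 1 else 0 :: real)" for x
  let ?St = "stubs n d"
  have bij: "bij_betw G ?St ?St"
  proof (rule bij_betw_byWitness[where f' = G])
    show "\<forall>a\<in>?St. G (G a) = a" "\<forall>a'\<in>?St. G (G a') = a'" using graphs_inv[OF G] by auto
    show "G ` ?St \<subseteq> ?St" "G ` ?St \<subseteq> ?St" using graphsD(1)[OF G] by auto
  qed
  have cart: "(\<Sum>x<n. \<Sum>i<d. h x i) = (\<Sum>s\<in>?St. h (fst s) (snd s))" for h :: "nat \<Rightarrow> nat \<Rightarrow> real"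
    by (simp add: stubs_def sum.cartesian_product split_def atLeast0LessThan)
  have ne: "1 - e v = (if \<eta> v then 0 else 1)" for v by (simp add: e_def)
  have D1: "(\<Sum>x<n. (if \<eta> x then 1 else 0) * (\<Sum>i<d. if \<eta> (nbr G x i) then 0 else 1))
      = (\<Sum>s\<in>?St. e (fst s) * (1 - e (fst (G s))))"
  proof -
    have "(\<Sum>s\<in>?St. e (fst s) * (1 - e (fst (G s)))) = (\<Sum>x<n. \<Sum>i<d. e x * (1 - e (nbr G x i)))"
      unfolding cart nbr_def by simp
    also have "\<dots> = (\<Sum>x<n. (if \<eta> x then 1 else 0) * (\<Sum>i<d. if \<eta> (nbr G x i) then 0 else 1))"
      unfolding ne by (simp add: sum_distrib_left e_def)
    finally show ?thesis by simp
  qed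
  have rei: "(\<Sum>s\<in>?St. e (fst (G s)) * (1 - e (fst (G (G s))))) = (\<Sum>s\<in>?St. e (fst s) * (1 - e (fst (G s))))"
    by (rule sum.reindex_bij_betw[OF bij])
  have rei2: "(\<Sum>s\<in>?St. e (fst (G s)) * (1 - e (fst s))) = (\<Sum>s\<in>?St. e (fst s) * (1 - e (fst (G s))))"
    using rei by (simp add: graphs_inv[OF G])
  have pair: "hdv \<eta> (fst s) (fst (G s)) = e (fst s) * (1 - e (fst (G s))) + e (fst (G s)) * (1 - e (fst s))" for s
    by (simp add: hdv_def e_def)
  have H2: "(\<Sum>s\<in>?St. hdv \<eta> (fst s) (fst (G s))) = 2 * (\<Sum>s\<in>?St. e (fst s) * (1 - e (fst (G s))))"
    unfolding pair sum.distrib rei2 by simp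
  have "discordance n d G \<eta> = 1 / real (d * n) * (\<Sum>s\<in>?St. hdv \<eta> (fst s) (fst (G s)))"
    unfolding discordance_def D1 H2 by simp
  also have "\<dots> = 1 / real (d * n) * (\<Sum>x<n. \<Sum>i<d. hdv \<eta> x (nbr G x i))"
    unfolding cart nbr_def by simp
  also have "(\<Sum>x<n. \<Sum>i<d. hdv \<eta> x (nbr G x i)) = (\<Sum>x<n. \<Sum>i<d. \<Sum>y\<in>{..<n} - {x}. \<Sum>j<d. aJ (x, y, i, j) G * hdv \<eta> x y)"
    by (intro sum.cong refl inner_J[OF G, symmetric]) auto
  also have "\<dots> = (\<Sum>x<n. \<Sum>y\<in>{..<n} - {x}. \<Sum>i<d. \<Sum>j<d. aJ (x, y, i, j) G * hdv \<eta> x y)"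
    by (intro sum.cong refl sum.swap)
  also have "1 / real (d * n) * \<dots> = (\<Sum>q\<in>Jset n d. 1 / real (d * n) * (aJ q G * hdv \<eta> (fst q) (fst (snd q))))"
    unfolding J_sum by (simp add: sum_distrib_left)
  finally show ?thesis .
qed




lemma swap3:
  fixes w :: "'x \<Rightarrow> real"
  shows "(\<Sum>\<xi>\<in>X. w \<xi> * ((\<Sum>q\<in>Q. c q * (\<Sum>G\<in>S. \<alpha> q G * P \<xi> q G)) / N))
       = (\<Sum>q\<in>Q. c q * (\<Sum>G\<in>S. \<alpha> q G * (\<Sum>\<xi>\<in>X. w \<xi> * P \<xi> q G))) / N"
proof -
  have "(\<Sum>\<xi>\<in>X. w \<xi> * ((\<Sum>q\<in>Q. c q * (\<Sum>G\<in>S. \<alpha> q G * P \<xi> q G)) / N))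
      = (\<Sum>\<xi>\<in>X. \<Sum>q\<in>Q. \<Sum>G\<in>S. w \<xi> * c q * \<alpha> q G * P \<xi> q G / N)"
    by (simp add: sum_distrib_left sum_divide_distrib mult.assoc)
  also have "\<dots> = (\<Sum>q\<in>Q. \<Sum>\<xi>\<in>X. \<Sum>G\<in>S. w \<xi> * c q * \<alpha> q G * P \<xi> q G / N)"
    by (rule sum.swap)
  also have "\<dots> = (\<Sum>q\<in>Q. \<Sum>G\<in>S. \<Sum>\<xi>\<in>X. w \<xi> * c q * \<alpha> q G * P \<xi> q G / N)"
    by (intro sum.cong refl sum.swap)
  also have "\<dots> = (\<Sum>q\<in>Q. c q * (\<Sum>G\<in>S. \<alpha> q G * (\<Sum>\<xi>\<in>X. w \<xi> * P \<xi> q G))) / N"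
    by (simp add: sum_distrib_left sum_divide_distrib mult_ac)
  finally show ?thesis .
qed

theorem lemma3p1:
  fixes n d :: nat and \<nu> t u :: real
  assumes "d \<ge> 3" and "n \<ge> 1" and "even (d * n)" and "\<nu> > 0"
    and "t \<ge> 0" and "0 \<le> u" and "u \<le> 1"
  shows "voter_exp_u n d \<nu> t u
           (\<lambda>(G, \<eta>). opinion_density n \<eta> * (1 - opinion_density n \<eta>))
         = u * (1 - u) * meet_tail_pi n d \<nu> t
       \<and> voter_exp_u n d \<nu> t u (\<lambda>(G, \<eta>). discordance n d G \<eta>)
         = 2 * u * (1 - u) * meet_tail_edge n d \<nu> t
       \<and> Max ((\<lambda>\<xi>. voter_exp_xi n d \<nu> t \<xi> (\<lambda>(G, \<eta>). discordance n d G \<eta>)) ` configs n)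
         \<le> 2 * meet_tail_edge n d \<nu> t"
proof -
  have d1: "d \<ge> 1" using assms(1) by simp
  have dn: "d * n \<ge> 2"
  proof -
    have "d * n \<ge> 3 * 1" using assms(1,2) by (intro mult_le_mono) auto
    then show ?thesis by simp
  qed
  have nu: "\<nu> \<ge> 0" using assms(4) by simp
  note prm = nu dn d1
  let ?S = "graphs n d" and ?V = "voter_gen n d \<nu>" and ?W = "walk_stop_gen n d \<nu>"
  define N where "N = real (card ?S)"
  define mt where "mt = meet_tail n d \<nu> t"
  have vx: "voter_exp_xi n d \<nu> t \<xi> F = (\<Sum>G\<in>?S. semigroup ?V t F (G, \<xi>)) / N" for \<xi> F
    by (simp add: voter_exp_xi_def avg_mu_def N_def)
  have vu: "voter_exp_u n d \<nu> t u F = (\<Sum>\<xi>\<in>configs n. wt n u \<xi> * voter_exp_xi n d \<nu> t \<xi> F)" for F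
    by (simp add: voter_exp_u_def wt_def)
  define F1 where "F1 = (\<lambda>(G::graph, \<eta>). opinion_density n \<eta> * (1 - opinion_density n \<eta>))"
  define c1 where "c1 = 1 / (2 * real n ^ 2)"
  have D1: "(\<Sum>G\<in>?S. semigroup ?V t F1 (G, \<xi>))
      = (\<Sum>q\<in>{..<n} \<times> {..<n}. c1 * (\<Sum>G'\<in>?S. 1 * semigroup ?W t (Psi \<xi>) (G', (fst q, snd q))))" for \<xi>
    by (rule gen_dual[OF prm, where Q = "{..<n} \<times> {..<n}" and xq = fst and yq = snd and \<alpha> = "\<lambda>q G. 1"
          and c = "\<lambda>q. c1"]) (auto simp: F1_def c1_def od_id[OF assms(2)])
  have P1: "voter_exp_u n d \<nu> t u F1 = u * (1 - u) * meet_tail_pi n d \<nu> t"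
  proof -
    have "voter_exp_u n d \<nu> t u F1
        = (\<Sum>\<xi>\<in>configs n. wt n u \<xi> * ((\<Sum>q\<in>{..<n} \<times> {..<n}. c1 * (\<Sum>G'\<in>?S. 1 * semigroup ?W t (Psi \<xi>) (G', (fst q, snd q)))) / N))"
      unfolding vu vx D1 ..
    also have "\<dots> = (\<Sum>q\<in>{..<n} \<times> {..<n}. c1 * (\<Sum>G'\<in>?S. 1 * (\<Sum>\<xi>\<in>configs n. wt n u \<xi> * semigroup ?W t (Psi \<xi>) (G', (fst q, snd q))))) / N"
      by (rule swap3)
    also have "\<dots> = (\<Sum>q\<in>{..<n} \<times> {..<n}. c1 * (\<Sum>G'\<in>?S. 1 * (2 * u * (1 - u) * mt G' (fst q) (snd q)))) / N"
    proof (intro arg_cong[where f = "\<lambda>r. r / N"] sum.cong refl arg_cong[where f = "\<lambda>r. c1 * r"])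
      fix q G' assume q: "q \<in> {..<n} \<times> {..<n}" and G': "G' \<in> ?S"
      show "1 * (\<Sum>\<xi>\<in>configs n. wt n u \<xi> * semigroup ?W t (Psi \<xi>) (G', (fst q, snd q)))
          = 1 * (2 * u * (1 - u) * mt G' (fst q) (snd q))"
        using bern_walk[OF prm G', of "fst q" "snd q" u t] q unfolding mt_def by auto
    qed
    also have "\<dots> = u * (1 - u) * meet_tail_pi n d \<nu> t"
    proof -
      define K where "K = 2 * u * (1 - u)"
      have "(\<Sum>q\<in>{..<n} \<times> {..<n}. c1 * (\<Sum>G'\<in>?S. 1 * (K * mt G' (fst q) (snd q))))
          = (\<Sum>x<n. \<Sum>y<n. c1 * (\<Sum>G'\<in>?S. 1 * (K * mt G' x y)))"
      proof -
        have "(\<Sum>x<n. \<Sum>y<n. c1 * (\<Sum>G'\<in>?S. 1 * (K * mt G' x y)))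
            = (\<Sum>(x, y)\<in>{..<n} \<times> {..<n}. c1 * (\<Sum>G'\<in>?S. 1 * (K * mt G' x y)))"
          by (rule sum.cartesian_product)
        then show ?thesis by (simp add: split_def)
      qed
      also have "\<dots> = (\<Sum>x<n. \<Sum>y<n. \<Sum>G\<in>?S. (c1 * K) * mt G x y)"
        by (simp add: sum_distrib_left mult.assoc)
      also have "\<dots> = (\<Sum>x<n. \<Sum>G\<in>?S. \<Sum>y<n. (c1 * K) * mt G x y)"
        by (intro sum.cong refl sum.swap)
      also have "\<dots> = (\<Sum>G\<in>?S. \<Sum>x<n. \<Sum>y<n. (c1 * K) * mt G x y)"
        by (rule sum.swap)
      also have "\<dots> = (c1 * K) * (\<Sum>G\<in>?S. \<Sum>x<n. \<Sum>y<n. mt G x y)"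
        by (simp add: sum_distrib_left)
      finally have e: "(\<Sum>q\<in>{..<n} \<times> {..<n}. c1 * (\<Sum>G'\<in>?S. 1 * (K * mt G' (fst q) (snd q))))
          = (c1 * K) * (\<Sum>G\<in>?S. \<Sum>x<n. \<Sum>y<n. mt G x y)" .
      have e2: "meet_tail_pi n d \<nu> t = (\<Sum>G\<in>?S. \<Sum>x<n. \<Sum>y<n. mt G x y) / real n ^ 2 / N"
        unfolding meet_tail_pi_def avg_mu_def N_def mt_def by (simp add: sum_divide_distrib)
      have n0: "real n \<noteq> 0" using assms(2) by simp
      have cK: "c1 * K = u * (1 - u) / real n ^ 2"
        unfolding c1_def K_def using n0 by simp
      show ?thesis
        unfolding K_def[symmetric] e e2 cK by (simp add: divide_inverse mult_ac)
    qed
    finally show ?thesis .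
  qed
  define D where "D = (\<lambda>(G::graph, \<eta>). discordance n d G \<eta>)"
  define c2 where "c2 = 1 / real (d * n)"
  let ?J = "Jset n d"
  have D2: "(\<Sum>G\<in>?S. semigroup ?V t D (G, \<xi>))
      = (\<Sum>q\<in>?J. c2 * (\<Sum>G'\<in>?S. aJ q G' * semigroup ?W t (Psi \<xi>) (G', (fst q, fst (snd q)))))" for \<xi>
    by (rule gen_dual[OF prm finite_Jset, where xq = fst and yq = "\<lambda>q. fst (snd q)" and \<alpha> = aJ
          and c = "\<lambda>q. c2"]) (auto simp: D_def c2_def disc_id Jset_mem aJ_bound)
  have mteJ: "meet_tail_edge n d \<nu> t = (\<Sum>q\<in>?J. c2 * (\<Sum>G\<in>?S. aJ q G * mt G (fst q) (fst (snd q)))) / N"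
  proof -
    have i: "(\<Sum>G\<in>?S. if G (x, i) = (y, j) then mt G x y else 0) = (\<Sum>G\<in>?S. aJ (x, y, i, j) G * mt G x y)" for x y i j
      by (intro sum.cong refl) (simp add: aJ_def)
    show ?thesis
      unfolding meet_tail_edge_def avg_mu_def J_sum N_def c2_def mt_def[symmetric] i
      by (simp add: sum_distrib_left sum_divide_distrib)
  qed
  have P2: "voter_exp_u n d \<nu> t u D = 2 * u * (1 - u) * meet_tail_edge n d \<nu> t"
  proof -
    have "voter_exp_u n d \<nu> t u D
        = (\<Sum>\<xi>\<in>configs n. wt n u \<xi> * ((\<Sum>q\<in>?J. c2 * (\<Sum>G'\<in>?S. aJ q G' * semigroup ?W t (Psi \<xi>) (G', (fst q, fst (snd q))))) / N))"
      unfolding vu vx D2 ..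
    also have "\<dots> = (\<Sum>q\<in>?J. c2 * (\<Sum>G'\<in>?S. aJ q G' * (\<Sum>\<xi>\<in>configs n. wt n u \<xi> * semigroup ?W t (Psi \<xi>) (G', (fst q, fst (snd q)))))) / N"
      by (rule swap3)
    also have "\<dots> = (\<Sum>q\<in>?J. c2 * (\<Sum>G'\<in>?S. aJ q G' * (2 * u * (1 - u) * mt G' (fst q) (fst (snd q))))) / N"
    proof (intro arg_cong[where f = "\<lambda>r. r / N"] sum.cong refl arg_cong[where f = "\<lambda>r. c2 * r"] arg_cong[where f = "\<lambda>r. aJ _ _ * r"])
      fix q G' assume q: "q \<in> ?J" and G': "G' \<in> ?S"
      show "(\<Sum>\<xi>\<in>configs n. wt n u \<xi> * semigroup ?W t (Psi \<xi>) (G', (fst q, fst (snd q))))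
          = 2 * u * (1 - u) * mt G' (fst q) (fst (snd q))"
        using bern_walk[OF prm G', of "fst q" "fst (snd q)" u t] Jset_mem[OF q] unfolding mt_def by auto
    qed
    also have "\<dots> = 2 * u * (1 - u) * ((\<Sum>q\<in>?J. c2 * (\<Sum>G'\<in>?S. aJ q G' * mt G' (fst q) (fst (snd q)))) / N)"
      by (simp add: sum_distrib_left mult_ac)
    finally show ?thesis unfolding mteJ .
  qed
  have c2nn: "c2 \<ge> 0" unfolding c2_def by simp
  have Nnn: "N \<ge> 0" unfolding N_def by simp
  have aJnn: "aJ q G \<ge> 0" for q G unfolding aJ_def by simp
  have mte_nn: "meet_tail_edge n d \<nu> t \<ge> 0"
    unfolding mteJ mt_def
    by (intro divide_nonneg_nonneg sum_nonneg mult_nonneg_nonneg c2nn aJnn mt_nonneg[OF prm assms(5)] Nnn)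
  have bound: "voter_exp_xi n d \<nu> t \<xi> D \<le> meet_tail_edge n d \<nu> t" for \<xi>
  proof -
    have "voter_exp_xi n d \<nu> t \<xi> D = (\<Sum>q\<in>?J. c2 * (\<Sum>G'\<in>?S. aJ q G' * semigroup ?W t (Psi \<xi>) (G', (fst q, fst (snd q))))) / N"
      unfolding vx D2 ..
    also have "\<dots> \<le> (\<Sum>q\<in>?J. c2 * (\<Sum>G'\<in>?S. aJ q G' * mt G' (fst q) (fst (snd q)))) / N"
      unfolding mt_def
      by (intro divide_right_mono sum_mono mult_left_mono psi_le_mt[OF prm assms(5)] c2nn aJnn Nnn)
    finally show ?thesis unfolding mteJ .
  qed
  have P3: "Max ((\<lambda>\<xi>. voter_exp_xi n d \<nu> t \<xi> D) ` configs n) \<le> 2 * meet_tail_edge n d \<nu> t"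
  proof (subst Max_le_iff)
    show "finite ((\<lambda>\<xi>. voter_exp_xi n d \<nu> t \<xi> D) ` configs n)" by (intro finite_imageI finite_configs)
    show "(\<lambda>\<xi>. voter_exp_xi n d \<nu> t \<xi> D) ` configs n \<noteq> {}" using configs_ne by blast
    show "\<forall>a\<in>(\<lambda>\<xi>. voter_exp_xi n d \<nu> t \<xi> D) ` configs n. a \<le> 2 * meet_tail_edge n d \<nu> t"
    proof
      fix a assume "a \<in> (\<lambda>\<xi>. voter_exp_xi n d \<nu> t \<xi> D) ` configs n"
      then obtain \<xi> where "a = voter_exp_xi n d \<nu> t \<xi> D" by blast
      then show "a \<le> 2 * meet_tail_edge n d \<nu> t" using bound[of \<xi>] mte_nn by linarith
    qed
  qed
  show ?thesis using P1 P2 P3 unfolding F1_def D_def by simp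
qed


end
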